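(* Let $x=\sum_{i=1}^n x_iv_i\in V$ and $I=\mathrm{supp}_x$. Let $F$ be a nonempty face of $C_I$, let $J=\{i\in I:\alpha_i\in F\}$ and set $v_F=\sum_{i\in J}x_iv_i$. Then $\mu_{\mathfrak a}:A\cdot v_F\to\mathrm{relint}\,F$ is a diffeomorphism onto $\mathrm{relint}\,F$. Moreover, $\overline{A\cdot x}$ is the disjoint union of the orbits $A\cdot v_F$, as $F$ runs over the set of nonempty faces of $C_I$.
   Context: Let $V$ be a finite-dimensional real vector space with a scalar product $\langle\cdot,\cdot\rangle$. Let $G\subset\mathrm{GL}(V)$ be a connected closed subgroup, closed under transpose, with Lie algebra $\mathfrak g$, such that $G=K\exp(\mathfrak p)$ with $K=G\cap\mathrm O(V)$, $\mathfrak p=\mathfrak g\cap\mathrm{Sym}(V)$. Let $\mathfrak a\subset\mathfrak p$ be an Abelian subalgebra, $A=\exp(\mathfrak a)$, and $\mu_{\mathfrak a}:V\to\mathfrak a^*$, $\mu_{\mathfrak a}(x)(\xi)=\langle\xi x,x\rangle$. Fix an orthonormal basis $v_1,\dots,v_n$ of $V$ simultaneously diagonalizing $\mathfrak a$, with $\xi v_i=\alpha_i(\xi)v_i$, $\alpha_i\in\mathfrak a^*$. For $x=\sum x_iv_i$, $\mathrm{supp}_x=\{i:x_i\ne0\}$; for $I\subset\{1,\dots,n\}$, $C_I=\{\sum_{i\in I}s_i\alpha_i:s_i\ge0\}$. A face of a convex set $E$ is a convex $F\subset E$ such that if $x,y\in E$ and the relative interior of $[x,y]$ meets $F$ then $[x,y]\subset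 F$; $\mathrm{relint}$ denotes the interior in the affine hull. *)

theory Defs
  imports "HOL-Analysis.Analysis"
begin

coinductive smooth_on :: "'x::euclidean_space set \<Rightarrow> ('x \<Rightarrow> 'y::euclidean_space) \<Rightarrow> bool" where
  "\<lbrakk> open U; g differentiable_on U;
     \<And>h. smooth_on U (\<lambda>y. frechet_derivative g (at y) h) \<rbrakk> \<Longrightarrow> smooth_on U g"

text \<open>Smooth maps on arbitrary subsets of Euclidean spaces (Milnor): locally the
  restriction of a C-infinity map defined on an open set.\<close>
definition smooth_map_on :: "'x::euclidean_space set \<Rightarrow> ('x \<Rightarrow> 'y::euclidean_space) \<Rightarrow> bool" where
  "smooth_map_on S f \<longleftrightarrow>
     (\<forall>x\<in>S. \<exists>U g. open U \<and> x \<in> U \<and> smooth_on U g \<and> (\<forall>y\<in>S \<inter> U. g y = f y))"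

definition diffeo_onto :: "('x::euclidean_space \<Rightarrow> 'y::euclidean_space) \<Rightarrow> 'x set \<Rightarrow> 'y set \<Rightarrow> bool" where
  "diffeo_onto f M N \<longleftrightarrow> bij_betw f M N \<and> smooth_map_on M f \<and> smooth_map_on N (inv_into M f)"

definition op_exp :: "('v::real_normed_vector \<Rightarrow> 'v) \<Rightarrow> 'v \<Rightarrow> 'v" where
  "op_exp T y = (\<Sum>n. (T ^^ n) y /\<^sub>R fact n)"

text \<open>Orbit A.y of A = exp(a), where a acts on V via act.\<close>
definition orbitA :: "('a \<Rightarrow> 'v \<Rightarrow> 'v::real_normed_vector) \<Rightarrow> 'v \<Rightarrow> 'v set" where
  "orbitA act y = {op_exp (act \<xi>) y | \<xi>. True}"

text \<open>Identification of the dual space a* with a (a euclidean space) via its inner product: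
  a linear functional f corresponds to the vector sum_b f(b) b over an orthonormal basis.\<close>
definition dual_vec :: "('a::euclidean_space \<Rightarrow> real) \<Rightarrow> 'a" where
  "dual_vec f = (\<Sum>b\<in>Basis. f b *\<^sub>R b)"

definition mu_a :: "('a::euclidean_space \<Rightarrow> 'v \<Rightarrow> 'v::real_inner) \<Rightarrow> 'v \<Rightarrow> 'a" where
  "mu_a act x = dual_vec (\<lambda>\<xi>. inner (act \<xi> x) x)"

definition supp :: "('i \<Rightarrow> 'v::real_inner) \<Rightarrow> 'v \<Rightarrow> 'i set" where
  "supp v x = {i. inner x (v i) \<noteq> 0}"

definition coneC :: "('i \<Rightarrow> 'a::real_vector) \<Rightarrow> 'i set \<Rightarrow> 'a set" where
  "coneC \<alpha> I = {(\<Sum>i\<in>I. s i *\<^sub>R \<alpha> i) | s. \<forall>i\<in>I. s i \<ge> 0}"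

end

theory Submission
  imports Defs "HOL-Analysis.Analysis"
begin

lemma smooth_onD:
  assumes "smooth_on U g"
  shows "open U" "g differentiable_on U" "\<And>h. smooth_on U (\<lambda>y. frechet_derivative g (at y) h)"
  using assms by (auto elim: smooth_on.cases)

lemma smooth_on_has_derivative:
  assumes "smooth_on U g" "y \<in> U"
  shows "(g has_derivative frechet_derivative g (at y)) (at y)"
proof -
  have "open U" "g differentiable_on U" using smooth_onD[OF assms(1)] by auto
  then have "g differentiable (at y)"
    using assms(2) by (simp add: differentiable_on_eq_differentiable_at)
  then show ?thesis using frechet_derivative_works by blast
qed

lemma smooth_on_coinduct_gen:
  fixes P :: "('x::euclidean_space \<Rightarrow> 'y::euclidean_space) \<Rightarrow> bool"
  assumes U: "open U" and Pg: "P g"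
    and step: "\<And>g. P g \<Longrightarrow> \<exists>D. (\<forall>y\<in>U. (g has_derivative D y) (at y)) \<and>
                   (\<forall>h. \<exists>f. (P f \<or> smooth_on U f) \<and> (\<forall>y\<in>U. f y = D y h))"
  shows "smooth_on U g"
proof -
  define X where "X = (\<lambda>U' (g::'x \<Rightarrow> 'y). U' = U \<and> (\<exists>f. (P f \<or> smooth_on U f) \<and> (\<forall>y\<in>U. g y = f y)))"
  have "X U g" using Pg unfolding X_def by blast
  then show ?thesis
  proof (rule smooth_on.coinduct[of X U g])
    fix U' g assume "X U' g"
    then obtain f where UU: "U' = U" and f: "P f \<or> smooth_on U f" and gf: "\<forall>y\<in>U. g y = f y"
      unfolding X_def by blast
    obtain D where D: "\<forall>y\<in>U. (f has_derivative D y) (at y)"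
      and Dh: "\<forall>h. \<exists>f'. (P f' \<or> smooth_on U f') \<and> (\<forall>y\<in>U. f' y = D y h)"
    proof (cases "P f")
      case True then show ?thesis using step that by blast
    next
      case False
      then have sf: "smooth_on U f" using f by blast
      show ?thesis
        apply (rule that[of "\<lambda>y. frechet_derivative f (at y)"])
        using smooth_on_has_derivative[OF sf] smooth_onD(3)[OF sf] by auto
    qed
    have gD: "\<forall>y\<in>U. (g has_derivative D y) (at y)"
      using D gf U by (metis has_derivative_transform_within_open)
    have "g differentiable_on U"
      using gD by (meson differentiable_at_imp_differentiable_on differentiable_def)
    moreover have "X U (\<lambda>y. frechet_derivative g (at y) h)" for h
    proof -
      obtain f' where f': "P f' \<or> smooth_on U f'" "\<forall>y\<in>U. f' y = D y h" using Dh by blast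
      have "\<forall>y\<in>U. frechet_derivative g (at y) h = f' y"
        using gD f'(2) frechet_derivative_at by metis
      then show ?thesis unfolding X_def using f'(1) by blast
    qed
    ultimately show "\<exists>U g'. U' = U \<and> g = g' \<and> open U \<and> g' differentiable_on U \<and>
            (\<forall>x. X U (\<lambda>y. frechet_derivative g' (at y) x) \<or> smooth_on U (\<lambda>y. frechet_derivative g' (at y) x))"
      using UU U by blast
  qed
qed

lemma smooth_on_cong:
  assumes "smooth_on U g" "\<And>y. y \<in> U \<Longrightarrow> f y = g y"
  shows "smooth_on U f"
proof (rule smooth_on_coinduct_gen[of U "\<lambda>f'. \<forall>y\<in>U. f' y = g y" f])
  show "open U" using smooth_onD(1)[OF assms(1)] .
  show "\<forall>y\<in>U. f y = g y" using assms(2) by blast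
  fix g' assume g': "\<forall>y\<in>U. g' y = g y"
  show "\<exists>D. (\<forall>y\<in>U. (g' has_derivative D y) (at y)) \<and>
                   (\<forall>h. \<exists>f. ((\<forall>y\<in>U. f y = g y) \<or> smooth_on U f) \<and> (\<forall>y\<in>U. f y = D y h))"
    apply (rule exI[of _ "\<lambda>y. frechet_derivative g (at y)"])
  proof (intro conjI ballI allI)
    fix y assume y: "y \<in> U"
    show "(g' has_derivative frechet_derivative g (at y)) (at y)"
      using has_derivative_transform_within_open[OF smooth_on_has_derivative[OF assms(1) y] smooth_onD(1)[OF assms(1)] y] g' by simp
  next
    fix h show "\<exists>f. ((\<forall>y\<in>U. f y = g y) \<or> smooth_on U f) \<and> (\<forall>y\<in>U. f y = frechet_derivative g (at y) h)"
      using smooth_onD(3)[OF assms(1)] by blast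
  qed
qed


lemma smooth_on_const: "open U \<Longrightarrow> smooth_on U (\<lambda>y. c)"
  apply (rule smooth_on_coinduct_gen[of U "\<lambda>g. \<exists>c. g = (\<lambda>y. c)"])
  by (auto intro!: exI[of _ "\<lambda>y h. 0"])

lemma smooth_on_linear:
  assumes U: "open U" and l: "linear (f :: 'x::euclidean_space \<Rightarrow> 'y::euclidean_space)"
  shows "smooth_on U f"
proof (rule smooth_on_coinduct_gen[of U "\<lambda>g. g = f"])
  fix g :: "'x \<Rightarrow> 'y" assume "g = f"
  then show "\<exists>D. (\<forall>y\<in>U. (g has_derivative D y) (at y)) \<and> (\<forall>h. \<exists>f'. (f' = f \<or> smooth_on U f') \<and> (\<forall>y\<in>U. f' y = D y h))"
    using l U smooth_on_const[OF U]
    by (intro exI[of _ "\<lambda>y. f"]) (auto simp: linear_conv_bounded_linear bounded_linear_imp_has_derivative)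
qed (use U in auto)

definition sumprod :: "(('x \<Rightarrow> real) \<times> ('x \<Rightarrow> 'y::real_vector)) list \<Rightarrow> 'x \<Rightarrow> 'y" where
  "sumprod L y = sum_list (map (\<lambda>(r,f). r y *\<^sub>R f y) L)"

definition sumprod_der :: "(('x::real_normed_vector \<Rightarrow> real) \<times> ('x \<Rightarrow> 'y::real_normed_vector)) list \<Rightarrow> 'x \<Rightarrow> (('x \<Rightarrow> real) \<times> ('x \<Rightarrow> 'y)) list" where
  "sumprod_der L h = concat (map (\<lambda>(r,f). [(\<lambda>y. frechet_derivative r (at y) h, f), (r, \<lambda>y. frechet_derivative f (at y) h)]) L)"

lemma sumprod_der_eq: "sumprod (sumprod_der L h) y = sum_list (map (\<lambda>(r,f). frechet_derivative r (at y) h *\<^sub>R f y + r y *\<^sub>R frechet_derivative f (at y) h) L)"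
  by (induction L) (auto simp: sumprod_def sumprod_der_def)

lemma sumprod_has_derivative:
  assumes "\<forall>(r,f)\<in>set L. r differentiable (at y) \<and> f differentiable (at y)"
  shows "(sumprod L has_derivative (\<lambda>h. sum_list (map (\<lambda>(r,f). frechet_derivative r (at y) h *\<^sub>R f y + r y *\<^sub>R frechet_derivative f (at y) h) L))) (at y)"
  using assms
proof (induction L)
  case Nil
  then show ?case by (simp add: sumprod_def)
next
  case (Cons a L)
  obtain r f where a: "a = (r,f)" by fastforce
  have r: "(r has_derivative frechet_derivative r (at y)) (at y)" and f: "(f has_derivative frechet_derivative f (at y)) (at y)"
    using Cons.prems a frechet_derivative_works by auto
  have "((\<lambda>y. r y *\<^sub>R f y) has_derivative (\<lambda>h. r y *\<^sub>R frechet_derivative f (at y) h + frechet_derivative r (at y) h *\<^sub>R f y)) (at y)"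
    using has_derivative_scaleR[OF r f] by simp
  from has_derivative_add[OF this Cons.IH] Cons.prems show ?case
    by (simp add: a sumprod_def add_ac)
qed

lemma smooth_on_sumprod:
  fixes L :: "(('x::euclidean_space \<Rightarrow> real) \<times> ('x \<Rightarrow> 'y::euclidean_space)) list"
  assumes U: "open U" and L: "\<forall>(r,f)\<in>set L. smooth_on U r \<and> smooth_on U f"
  shows "smooth_on U (sumprod L)"
proof (rule smooth_on_coinduct_gen[of U "\<lambda>g. \<exists>L. (\<forall>(r,f)\<in>set L. smooth_on U r \<and> smooth_on U f) \<and> (\<forall>y\<in>U. g y = sumprod L y)"])
  fix g :: "'x \<Rightarrow> 'y" assume "\<exists>L. (\<forall>(r,f)\<in>set L. smooth_on U r \<and> smooth_on U f) \<and> (\<forall>y\<in>U. g y = sumprod L y)"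
  then obtain L where L: "\<forall>(r,f)\<in>set L. smooth_on U r \<and> smooth_on U f" and g: "\<forall>y\<in>U. g y = sumprod L y" by blast
  define D where "D = (\<lambda>y h. sum_list (map (\<lambda>(r,f). frechet_derivative r (at y) h *\<^sub>R f y + r y *\<^sub>R frechet_derivative f (at y) h) L))"
  have "(g has_derivative D y) (at y)" if y: "y \<in> U" for y
  proof -
    have "\<forall>(r,f)\<in>set L. r differentiable (at y) \<and> f differentiable (at y)"
      using L y by (auto dest!: smooth_on_has_derivative simp: differentiable_def)
    from sumprod_has_derivative[OF this] have "(sumprod L has_derivative D y) (at y)" unfolding D_def .
    then show ?thesis by (rule has_derivative_transform_within_open[OF _ U y]) (use g in auto)
  qed
  moreover have "\<exists>f. ((\<exists>L. (\<forall>(r,f)\<in>set L. smooth_on U r \<and> smooth_on U f) \<and> (\<forall>y\<in>U. f y = sumprod L y)) \<or> smooth_on U f) \<and> (\<forall>y\<in>U. f y = D y h)" for h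
  proof -
    have "\<forall>(r,f)\<in>set (sumprod_der L h). smooth_on U r \<and> smooth_on U f"
      using L by (auto simp: sumprod_der_def dest: smooth_onD(3))
    then show ?thesis
      by (intro exI[of _ "sumprod (sumprod_der L h)"]) (auto simp: sumprod_der_eq D_def)
  qed
  ultimately show "\<exists>D. (\<forall>y\<in>U. (g has_derivative D y) (at y)) \<and>
     (\<forall>h. \<exists>f. ((\<exists>L. (\<forall>(r,f)\<in>set L. smooth_on U r \<and> smooth_on U f) \<and> (\<forall>y\<in>U. f y = sumprod L y)) \<or> smooth_on U f) \<and> (\<forall>y\<in>U. f y = D y h))"
    by blast
qed (use U L in auto)

lemma smooth_on_scaleR:
  fixes r :: "'x::euclidean_space \<Rightarrow> real" and f :: "'x \<Rightarrow> 'y::euclidean_space"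
  assumes "smooth_on U r" "smooth_on U f"
  shows "smooth_on U (\<lambda>y. r y *\<^sub>R f y)"
proof -
  have "smooth_on U (sumprod [(r,f)])"
    using smooth_on_sumprod[of U "[(r,f)]"] assms smooth_onD(1)[OF assms(1)] by simp
  then show ?thesis by (rule smooth_on_cong) (simp add: sumprod_def)
qed

lemma smooth_on_add:
  fixes f g :: "'x::euclidean_space \<Rightarrow> 'y::euclidean_space"
  assumes "smooth_on U f" "smooth_on U g"
  shows "smooth_on U (\<lambda>y. f y + g y)"
proof -
  have U: "open U" using smooth_onD(1)[OF assms(1)] .
  have "smooth_on U (sumprod [((\<lambda>y. 1::real), f), ((\<lambda>y. 1::real), g)])"
  proof (rule smooth_on_sumprod[OF U])
    have c1: "smooth_on U (\<lambda>y::'x. 1::real)" by (rule smooth_on_const[OF U])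
    then show "\<forall>(r, f)\<in>set [((\<lambda>y. 1::real), f), ((\<lambda>y. 1::real), g)]. smooth_on U r \<and> smooth_on U f"
      using assms by auto
  qed
  then show ?thesis by (rule smooth_on_cong) (simp add: sumprod_def)
qed

lemma smooth_on_mult:
  fixes f g :: "'x::euclidean_space \<Rightarrow> real"
  assumes "smooth_on U f" "smooth_on U g"
  shows "smooth_on U (\<lambda>y. f y * g y)"
  using smooth_on_scaleR[OF assms] by simp

lemma smooth_on_sum:
  fixes f :: "'i \<Rightarrow> 'x::euclidean_space \<Rightarrow> 'y::euclidean_space"
  assumes U: "open U" and "\<And>i. i \<in> K \<Longrightarrow> smooth_on U (f i)"
  shows "smooth_on U (\<lambda>y. \<Sum>i\<in>K. f i y)"
  using assms(2)
proof (induction K rule: infinite_finite_induct)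
  case (infinite A)
  then show ?case using smooth_on_const[OF U] by simp
next
  case empty
  then show ?case using smooth_on_const[OF U] by simp
next
  case (insert x F)
  then show ?case using smooth_on_add[of U "f x" "\<lambda>y. \<Sum>i\<in>F. f i y"] by simp
qed

lemma smooth_on_compose_linear:
  fixes f :: "'x::euclidean_space \<Rightarrow> 'y::euclidean_space" and l :: "'y \<Rightarrow> 'z::euclidean_space"
  assumes l: "linear l" and f: "smooth_on U f"
  shows "smooth_on U (\<lambda>y. l (f y))"
proof -
  have U: "open U" using smooth_onD(1)[OF f] .
  have bl: "bounded_linear l" using l by (simp add: linear_conv_bounded_linear)
  show ?thesis
  proof (rule smooth_on_coinduct_gen[of U "\<lambda>g. \<exists>f. smooth_on U f \<and> g = (\<lambda>y. l (f y))"])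
    fix g assume "\<exists>f. smooth_on U f \<and> g = (\<lambda>y. l (f y))"
    then obtain f where f: "smooth_on U f" and g: "g = (\<lambda>y. l (f y))" by blast
    show "\<exists>D. (\<forall>y\<in>U. (g has_derivative D y) (at y)) \<and>
         (\<forall>h. \<exists>f'. ((\<exists>f. smooth_on U f \<and> f' = (\<lambda>y. l (f y))) \<or> smooth_on U f') \<and> (\<forall>y\<in>U. f' y = D y h))"
      apply (rule exI[of _ "\<lambda>y h. l (frechet_derivative f (at y) h)"])
      using bounded_linear.has_derivative[OF bl smooth_on_has_derivative[OF f]] smooth_onD(3)[OF f] g
      by blast
  qed (use f U in auto)
qed

lemma smooth_on_exp_inner:
  fixes b :: "'x::euclidean_space"
  assumes U: "open U"
  shows "smooth_on U (\<lambda>y. exp (inner b y))"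
proof (rule smooth_on_coinduct_gen[of U "\<lambda>g. \<exists>c. g = (\<lambda>y. c * exp (inner b y))"])
  fix g assume "\<exists>c. g = (\<lambda>y. c * exp (inner b y))"
  then obtain c where g: "g = (\<lambda>y. c * exp (inner b y))" by blast
  have "(g has_derivative (\<lambda>h. (c * inner b h) * exp (inner b y))) (at y)" for y
    unfolding g by (auto intro!: derivative_eq_intros simp: algebra_simps)
  then show "\<exists>D. (\<forall>y\<in>U. (g has_derivative D y) (at y)) \<and>
         (\<forall>h. \<exists>f. ((\<exists>c. f = (\<lambda>y. c * exp (inner b y))) \<or> smooth_on U f) \<and> (\<forall>y\<in>U. f y = D y h))"
    by (intro exI[of _ "\<lambda>y h. (c * inner b h) * exp (inner b y)"]) blast
qed (use U in \<open>auto intro: exI[of _ 1]\<close>)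

locale ift =
  fixes \<Phi> :: "'a::euclidean_space \<Rightarrow> 'a"
  assumes \<Phi>_smooth: "smooth_on UNIV \<Phi>" and \<Phi>_inj: "inj \<Phi>"
    and L_inj: "\<And>\<xi>. inj (frechet_derivative \<Phi> (at \<xi>))"
begin

definition L where "L \<xi> = frechet_derivative \<Phi> (at \<xi>)"
definition Linv where "Linv \<xi> = inv (L \<xi>)"
definition Lb' where "Lb' b \<xi> = frechet_derivative (\<lambda>\<eta>. L \<eta> b) (at \<xi>)"
definition D2 where "D2 \<xi> y d = (\<Sum>b\<in>Basis. inner y b *\<^sub>R Lb' b \<xi> d)"

lemma \<Phi>_der: "(\<Phi> has_derivative L \<xi>) (at \<xi>)"
  unfolding L_def using smooth_on_has_derivative[OF \<Phi>_smooth] by simp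

lemma L_linear: "linear (L \<xi>)"
  using \<Phi>_der has_derivative_linear by blast

lemma L_surj: "surj (L \<xi>)"
  using linear_injective_imp_surjective[OF L_linear] L_inj unfolding L_def by auto

lemma L_Linv: "L \<xi> (Linv \<xi> y) = y"
  unfolding Linv_def using L_surj by (simp add: surj_f_inv_f)

lemma Linv_L: "Linv \<xi> (L \<xi> z) = z"
  unfolding Linv_def using L_inj unfolding L_def by (simp add: inv_f_f)

lemma Linv_linear: "linear (Linv \<xi>)"
  unfolding Linv_def using inj_linear_imp_inv_linear[OF L_linear] L_inj unfolding L_def by blast

lemma Lb_smooth: "smooth_on UNIV (\<lambda>\<xi>. L \<xi> b)"
  unfolding L_def using smooth_onD(3)[OF \<Phi>_smooth] by blast

lemma Lb_der: "((\<lambda>\<eta>. L \<eta> b) has_derivative Lb' b \<xi>) (at \<xi>)"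
  unfolding Lb'_def using smooth_on_has_derivative[OF Lb_smooth] by simp

lemma L_expand: "L \<xi> z = (\<Sum>b\<in>Basis. inner z b *\<^sub>R L \<xi> b)"
proof -
  have "L \<xi> z = L \<xi> (\<Sum>b\<in>Basis. inner z b *\<^sub>R b)" by (simp add: euclidean_representation)
  also have "\<dots> = (\<Sum>b\<in>Basis. inner z b *\<^sub>R L \<xi> b)"
    using L_linear by (simp add: linear_sum linear_scale)
  finally show ?thesis .
qed

lemma D2_linear: "linear (D2 \<xi> y)"
proof -
  have "linear (Lb' b \<xi>)" for b using Lb_der has_derivative_linear by blast
  then show ?thesis unfolding D2_def
    by (intro linear_compose_sum) (auto intro: linear_compose_scale_right)
qed

lemma Linv_has_derivative:
  "((\<lambda>\<xi>. Linv \<xi> c) has_derivative (\<lambda>d. - Linv \<xi> (D2 \<xi> (Linv \<xi> c) d))) (at \<xi>)"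
proof -
  define \<Theta> :: "'a \<times> 'a \<Rightarrow> 'a \<times> 'a" where "\<Theta> p = (fst p, \<Sum>b\<in>Basis. inner (snd p) b *\<^sub>R L (fst p) b)" for p
  define \<Theta>inv :: "'a \<times> 'a \<Rightarrow> 'a \<times> 'a" where "\<Theta>inv p = (fst p, Linv (fst p) (snd p))" for p
  define z where "z = Linv \<xi> c"
  define \<Theta>' :: "'a \<times> 'a \<Rightarrow> 'a \<times> 'a" where
    "\<Theta>' dp = (fst dp, \<Sum>b\<in>Basis. (inner (snd dp) b *\<^sub>R L \<xi> b + inner z b *\<^sub>R Lb' b \<xi> (fst dp)))" for dp
  define g' :: "'a \<times> 'a \<Rightarrow> 'a \<times> 'a" where "g' dp = (fst dp, Linv \<xi> (snd dp - D2 \<xi> z (fst dp)))" for dp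
  have \<Theta>_eq: "\<Theta> p = (fst p, L (fst p) (snd p))" for p
    unfolding \<Theta>_def by (simp add: L_expand[symmetric])
  have der_each: "((\<lambda>p. inner (snd p) b *\<^sub>R L (fst p) b) has_derivative
        (\<lambda>dp. inner (snd dp) b *\<^sub>R L \<xi> b + inner z b *\<^sub>R Lb' b \<xi> (fst dp))) (at (\<xi>, z))" for b
  proof -
    have i: "((\<lambda>p. inner (snd p) b) has_derivative (\<lambda>dp. inner (snd dp) b)) (at (\<xi>, z))"
      by (intro bounded_linear_imp_has_derivative bounded_linear_inner_left_comp bounded_linear_snd)
    have l: "((\<lambda>p. L (fst p) b) has_derivative (\<lambda>dp. Lb' b \<xi> (fst dp))) (at (\<xi>, z))"
    proof -
      have f: "(fst has_derivative fst) (at (\<xi>, z))" by (rule bounded_linear_imp_has_derivative[OF bounded_linear_fst])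
      have "((\<lambda>\<eta>. L \<eta> b) has_derivative Lb' b \<xi>) (at (fst (\<xi>, z)))" using Lb_der by simp
      from has_derivative_compose[OF f this] show ?thesis by simp
    qed
    show ?thesis using has_derivative_scaleR[OF i l] by (simp add: add_ac)
  qed
  have d\<Theta>: "(\<Theta> has_derivative \<Theta>') (at (\<xi>, z))"
    unfolding \<Theta>_def \<Theta>'_def
    by (intro has_derivative_Pair has_derivative_sum der_each has_derivative_fst[OF has_derivative_ident])
  have cont: "continuous_on UNIV \<Theta>"
  proof -
    have cL: "continuous_on UNIV (\<lambda>\<eta>. L \<eta> b)" for b
      using Lb_der has_derivative_continuous continuous_at_imp_continuous_on by blast
    have "continuous_on UNIV (\<lambda>p. L (fst p) b)" for b
      by (rule continuous_on_compose2[OF cL[of b]]) (auto intro: continuous_intros)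
    then show ?thesis unfolding \<Theta>_def by (auto intro!: continuous_intros)
  qed
  have inv\<Theta>: "\<Theta>inv (\<Theta> p) = p" for p
    by (simp add: \<Theta>inv_def \<Theta>_eq Linv_L)
  have \<Theta>'_eq: "\<Theta>' dp = (fst dp, L \<xi> (snd dp) + D2 \<xi> z (fst dp))" for dp
    unfolding \<Theta>'_def D2_def by (simp add: sum.distrib L_expand[of \<xi> "snd dp"])
  have id: "\<Theta>' \<circ> g' = id"
    by (rule ext) (simp add: \<Theta>'_eq g'_def L_Linv)
  have "(\<Theta>inv has_derivative g') (at (\<Theta> (\<xi>, z)))"
    by (rule has_derivative_inverse_strong[OF open_UNIV UNIV_I cont _ d\<Theta> id]) (simp add: inv\<Theta>)
  moreover have "\<Theta> (\<xi>, z) = (\<xi>, c)" by (simp add: \<Theta>_eq z_def L_Linv)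
  ultimately have d: "(\<Theta>inv has_derivative g') (at (\<xi>, c))" by simp
  have p: "((\<lambda>x. (x, c)) has_derivative (\<lambda>d. (d, 0))) (at \<xi>)"
    by (intro has_derivative_Pair has_derivative_ident has_derivative_const)
  have "((\<lambda>x. snd (\<Theta>inv (x, c))) has_derivative (\<lambda>d. snd (g' (d, 0)))) (at \<xi>)"
    using has_derivative_snd[OF has_derivative_compose[OF p d]] by (simp add: o_def)
  moreover have "snd (g' (d, 0)) = - Linv \<xi> (D2 \<xi> (Linv \<xi> c) d)" for d
    using linear_neg[OF Linv_linear] by (simp add: g'_def z_def)
  ultimately show ?thesis by (simp add: \<Theta>inv_def)
qed

lemma Linv_expand: "Linv \<xi> w = (\<Sum>e\<in>Basis. inner w e *\<^sub>R Linv \<xi> e)"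
proof -
  have "Linv \<xi> w = Linv \<xi> (\<Sum>e\<in>Basis. inner w e *\<^sub>R e)" by (simp add: euclidean_representation)
  also have "\<dots> = (\<Sum>e\<in>Basis. inner w e *\<^sub>R Linv \<xi> e)"
    using Linv_linear by (simp add: linear_sum linear_scale)
  finally show ?thesis .
qed

inductive AR :: "('a \<Rightarrow> real) \<Rightarrow> bool" where
  AR_smooth: "smooth_on UNIV f \<Longrightarrow> AR f"
| AR_ent: "AR (\<lambda>\<xi>. inner (Linv \<xi> c) b)"
| AR_add: "AR f \<Longrightarrow> AR g \<Longrightarrow> AR (\<lambda>\<xi>. f \<xi> + g \<xi>)"
| AR_mul: "AR f \<Longrightarrow> AR g \<Longrightarrow> AR (\<lambda>\<xi>. f \<xi> * g \<xi>)"

lemma AR_sum: "(\<And>i. i \<in> K \<Longrightarrow> AR (f i)) \<Longrightarrow> AR (\<lambda>\<xi>. \<Sum>i\<in>K. f i \<xi>)"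
proof (induction K rule: infinite_finite_induct)
  case (infinite A)
  then show ?case using AR_smooth[OF smooth_on_const[OF open_UNIV]] by simp
next
  case empty
  then show ?case using AR_smooth[OF smooth_on_const[OF open_UNIV]] by simp
next
  case (insert x F)
  then show ?case using AR_add[of "f x" "\<lambda>\<xi>. \<Sum>i\<in>F. f i \<xi>"] by simp
qed

lemma AR_neg: "AR f \<Longrightarrow> AR (\<lambda>\<xi>. - f \<xi>)"
  using AR_mul[OF AR_smooth[OF smooth_on_const[OF open_UNIV, of "-1"]], of f] by simp

lemma AR_der: "AR f \<Longrightarrow> \<exists>D. (\<forall>\<xi>. (f has_derivative D \<xi>) (at \<xi>)) \<and> (\<forall>h. AR (\<lambda>\<xi>. D \<xi> h))"
proof (induction rule: AR.induct)
  case (AR_smooth f)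
  show ?case
    apply (rule exI[of _ "\<lambda>\<xi>. frechet_derivative f (at \<xi>)"])
    using smooth_on_has_derivative[OF AR_smooth] smooth_onD(3)[OF AR_smooth] AR.AR_smooth by blast
next
  case (AR_ent c b)
  define D where "D \<xi> d = inner (- Linv \<xi> (D2 \<xi> (Linv \<xi> c) d)) b" for \<xi> d
  have "((\<lambda>\<xi>. inner (Linv \<xi> c) b) has_derivative D \<xi>) (at \<xi>)" for \<xi>
    unfolding D_def using bounded_linear.has_derivative[OF bounded_linear_inner_left Linv_has_derivative] .
  moreover have "AR (\<lambda>\<xi>. D \<xi> h)" for h
  proof -
    have eq: "D \<xi> h = - (\<Sum>b'\<in>Basis. inner (Linv \<xi> c) b' * (\<Sum>e\<in>Basis. inner (Lb' b' \<xi> h) e * inner (Linv \<xi> e) b))" for \<xi>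
    proof -
      have "Linv \<xi> (D2 \<xi> (Linv \<xi> c) h) = (\<Sum>b'\<in>Basis. inner (Linv \<xi> c) b' *\<^sub>R Linv \<xi> (Lb' b' \<xi> h))"
        unfolding D2_def using Linv_linear by (simp add: linear_sum linear_scale)
      then show ?thesis unfolding D_def
        by (simp add: Linv_expand[of \<xi> "Lb' _ \<xi> h"] inner_sum_left sum_distrib_left)
    qed
    have sm: "AR (\<lambda>\<xi>. inner (Lb' b' \<xi> h) e)" for b' e
    proof -
      have "smooth_on UNIV (\<lambda>\<xi>. Lb' b' \<xi> h)"
        unfolding Lb'_def using smooth_onD(3)[OF Lb_smooth] .
      from smooth_on_compose_linear[OF bounded_linear.linear[OF bounded_linear_inner_left] this, of e]
      show ?thesis by (intro AR.AR_smooth) simp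
    qed
    show ?thesis unfolding eq
      by (intro AR_neg AR_sum AR.AR_mul AR.AR_ent sm)
  qed
  ultimately show ?case by blast
next
  case (AR_add f g)
  then obtain Df Dg where f: "\<forall>\<xi>. (f has_derivative Df \<xi>) (at \<xi>)" "\<forall>h. AR (\<lambda>\<xi>. Df \<xi> h)"
    and g: "\<forall>\<xi>. (g has_derivative Dg \<xi>) (at \<xi>)" "\<forall>h. AR (\<lambda>\<xi>. Dg \<xi> h)" by blast
  show ?case
    apply (rule exI[of _ "\<lambda>\<xi> h. Df \<xi> h + Dg \<xi> h"])
    using f g by (auto intro: has_derivative_add AR.AR_add)
next
  case (AR_mul f g)
  then obtain Df Dg where f: "\<forall>\<xi>. (f has_derivative Df \<xi>) (at \<xi>)" "\<forall>h. AR (\<lambda>\<xi>. Df \<xi> h)"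
    and g: "\<forall>\<xi>. (g has_derivative Dg \<xi>) (at \<xi>)" "\<forall>h. AR (\<lambda>\<xi>. Dg \<xi> h)" by blast
  show ?case
    apply (rule exI[of _ "\<lambda>\<xi> h. f \<xi> * Dg \<xi> h + Df \<xi> h * g \<xi>"])
  proof (intro conjI allI)
    fix \<xi> show "((\<lambda>\<xi>. f \<xi> * g \<xi>) has_derivative (\<lambda>h. f \<xi> * Dg \<xi> h + Df \<xi> h * g \<xi>)) (at \<xi>)"
      using f g by (auto intro: has_derivative_mult)
  next
    fix h show "AR (\<lambda>\<xi>. f \<xi> * Dg \<xi> h + Df \<xi> h * g \<xi>)"
      using f g AR_mul.hyps by (intro AR.AR_add AR.AR_mul) auto
  qed
qed

lemma AR_imp_smooth: "AR f \<Longrightarrow> smooth_on UNIV f"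
proof (rule smooth_on_coinduct_gen[of UNIV AR])
  fix g assume "AR g"
  then obtain D where "\<forall>\<xi>. (g has_derivative D \<xi>) (at \<xi>)" "\<forall>h. AR (\<lambda>\<xi>. D \<xi> h)"
    using AR_der by blast
  then show "\<exists>D. (\<forall>y\<in>UNIV. (g has_derivative D y) (at y)) \<and> (\<forall>h. \<exists>f. (AR f \<or> smooth_on UNIV f) \<and> (\<forall>y\<in>UNIV. f y = D y h))"
    by (intro exI[of _ D]) auto
qed auto

lemma smooth_inv_comp:
  fixes h :: "'a \<Rightarrow> 'y::euclidean_space"
  assumes h: "smooth_on UNIV h"
  shows "smooth_on (range \<Phi>) (\<lambda>p. h (inv \<Phi> p))"
proof -
  have cont: "continuous_on UNIV \<Phi>"
    using \<Phi>_der has_derivative_continuous continuous_at_imp_continuous_on by blast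
  have U: "open (range \<Phi>)"
    using invariance_of_domain[OF cont open_UNIV] \<Phi>_inj by simp
  have Gder: "(inv \<Phi> has_derivative Linv \<xi>) (at (\<Phi> \<xi>))" for \<xi>
  proof (rule has_derivative_inverse_strong[OF open_UNIV UNIV_I cont _ \<Phi>_der])
    show "inv \<Phi> (\<Phi> x) = x" for x using \<Phi>_inj by simp
    show "L \<xi> \<circ> Linv \<xi> = id" by (rule ext) (simp add: L_Linv)
  qed
  show ?thesis
  proof (rule smooth_on_coinduct_gen[OF U, of "\<lambda>g. \<exists>h. smooth_on UNIV h \<and> g = (\<lambda>p. h (inv \<Phi> p))"])
    show "\<exists>h'. smooth_on UNIV h' \<and> (\<lambda>p. h (inv \<Phi> p)) = (\<lambda>p. h' (inv \<Phi> p))" using h by blast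
  next
    fix g :: "'a \<Rightarrow> 'y" assume "\<exists>h. smooth_on UNIV h \<and> g = (\<lambda>p. h (inv \<Phi> p))"
    then obtain h where h: "smooth_on UNIV h" and g: "g = (\<lambda>p. h (inv \<Phi> p))" by blast
    define D where "D p k = frechet_derivative h (at (inv \<Phi> p)) (Linv (inv \<Phi> p) k)" for p k
    have "(g has_derivative D p) (at p)" if "p \<in> range \<Phi>" for p
    proof -
      obtain \<xi> where p: "p = \<Phi> \<xi>" using \<open>p \<in> range \<Phi>\<close> by blast
      have G: "inv \<Phi> p = \<xi>" using p \<Phi>_inj by simp
      have hd: "(h has_derivative frechet_derivative h (at \<xi>)) (at (inv \<Phi> p))"
        using smooth_on_has_derivative[OF h] G by simp
      from has_derivative_compose[OF Gder[of \<xi>, folded p] hd]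
      show ?thesis unfolding g D_def G by simp
    qed
    moreover have "\<exists>f. ((\<exists>h. smooth_on UNIV h \<and> f = (\<lambda>p. h (inv \<Phi> p))) \<or> smooth_on (range \<Phi>) f) \<and> (\<forall>y\<in>range \<Phi>. f y = D y k)" for k
    proof -
      define H where "H \<xi> = (\<Sum>b\<in>Basis. inner (Linv \<xi> k) b *\<^sub>R frechet_derivative h (at \<xi>) b)" for \<xi>
      have "smooth_on UNIV H"
        unfolding H_def
        by (intro smooth_on_sum smooth_on_scaleR AR_imp_smooth AR_ent smooth_onD(3)[OF h] open_UNIV)
      moreover have "H (inv \<Phi> p) = D p k" for p
      proof -
        have lin: "linear (frechet_derivative h (at (inv \<Phi> p)))"
          using smooth_on_has_derivative[OF h] has_derivative_linear by blast
        have "D p k = frechet_derivative h (at (inv \<Phi> p)) (\<Sum>b\<in>Basis. inner (Linv (inv \<Phi> p) k) b *\<^sub>R b)"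
          unfolding D_def by (simp add: euclidean_representation)
        also have "\<dots> = H (inv \<Phi> p)" unfolding H_def using lin by (simp add: linear_sum linear_scale)
        finally show ?thesis by simp
      qed
      ultimately show ?thesis by (intro exI[of _ "\<lambda>p. H (inv \<Phi> p)"]) auto
    qed
    ultimately show "\<exists>D. (\<forall>y\<in>range \<Phi>. (g has_derivative D y) (at y)) \<and>
         (\<forall>k. \<exists>f. ((\<exists>h. smooth_on UNIV h \<and> f = (\<lambda>p. h (inv \<Phi> p))) \<or> smooth_on (range \<Phi>) f) \<and> (\<forall>y\<in>range \<Phi>. f y = D y k))"
      by blast
  qed
qed

end

context
  fixes a :: "'i \<Rightarrow> 'a::euclidean_space"
begin

lemma coneC_iff: "p \<in> coneC a I \<longleftrightarrow> (\<exists>s. (\<forall>i\<in>I. s i \<ge> 0) \<and> p = (\<Sum>i\<in>I. s i *\<^sub>R a i))"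
  unfolding coneC_def by blast

lemma coneC_memI: "(\<forall>i\<in>I. s i \<ge> 0) \<Longrightarrow> (\<Sum>i\<in>I. s i *\<^sub>R a i) \<in> coneC a I"
  unfolding coneC_def by blast

lemma coneC_0: "0 \<in> coneC a I"
  using coneC_memI[of I "\<lambda>_. 0"] by simp

lemma coneC_add: "p \<in> coneC a I \<Longrightarrow> q \<in> coneC a I \<Longrightarrow> p + q \<in> coneC a I"
  unfolding coneC_iff
proof (elim exE conjE)
  fix s t assume s: "\<forall>i\<in>I. 0 \<le> s i" "p = (\<Sum>i\<in>I. s i *\<^sub>R a i)" and t: "\<forall>i\<in>I. 0 \<le> t i" "q = (\<Sum>i\<in>I. t i *\<^sub>R a i)"
  show "\<exists>s'. (\<forall>i\<in>I. 0 \<le> s' i) \<and> p + q = (\<Sum>i\<in>I. s' i *\<^sub>R a i)"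
    by (rule exI[of _ "\<lambda>i. s i + t i"]) (use s t in \<open>auto simp: scaleR_add_left sum.distrib\<close>)
qed

lemma coneC_scale: "p \<in> coneC a I \<Longrightarrow> c \<ge> 0 \<Longrightarrow> c *\<^sub>R p \<in> coneC a I"
  unfolding coneC_iff
proof (elim exE conjE)
  fix s assume s: "\<forall>i\<in>I. 0 \<le> s i" "p = (\<Sum>i\<in>I. s i *\<^sub>R a i)" and c: "c \<ge> 0"
  show "\<exists>s'. (\<forall>i\<in>I. 0 \<le> s' i) \<and> c *\<^sub>R p = (\<Sum>i\<in>I. s' i *\<^sub>R a i)"
    by (rule exI[of _ "\<lambda>i. c * s i"]) (use s c in \<open>auto simp: scaleR_sum_right\<close>)
qed

lemma convex_coneC: "convex (coneC a I)"
  unfolding convex_def using coneC_add coneC_scale by blast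

lemma coneC_gen: "finite I \<Longrightarrow> i \<in> I \<Longrightarrow> a i \<in> coneC a I"
proof -
  assume fin: "finite I" and i: "i \<in> I"
  have "(\<Sum>j\<in>I. (if j = i then 1 else 0) *\<^sub>R a j) = (\<Sum>j\<in>I. if j = i then a j else 0)"
    by (rule sum.cong) auto
  also have "\<dots> = a i" using fin i by (simp add: sum.delta')
  finally show ?thesis using coneC_memI[of I "\<lambda>j. if j = i then 1 else 0"] by simp
qed

lemma coneC_restrict:
  assumes "finite I" "J \<subseteq> I"
  shows "(\<Sum>i\<in>I. (if i \<in> J then s i else 0) *\<^sub>R a i) = (\<Sum>i\<in>J. s i *\<^sub>R a i)"
proof -
  have "(\<Sum>i\<in>I. (if i \<in> J then s i else 0) *\<^sub>R a i) = (\<Sum>i\<in>I. if i \<in> J then s i *\<^sub>R a i else 0)"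
    by (rule sum.cong) auto
  also have "\<dots> = (\<Sum>i\<in>I \<inter> J. s i *\<^sub>R a i)" by (simp add: sum.inter_restrict[OF assms(1)])
  also have "I \<inter> J = J" using assms(2) by blast
  finally show ?thesis .
qed

lemma coneC_mono: "finite I \<Longrightarrow> J \<subseteq> I \<Longrightarrow> coneC a J \<subseteq> coneC a I"
proof
  fix p assume fin: "finite I" and JI: "J \<subseteq> I" and "p \<in> coneC a J"
  then obtain s where s: "\<forall>i\<in>J. s i \<ge> 0" "p = (\<Sum>i\<in>J. s i *\<^sub>R a i)" unfolding coneC_iff by blast
  show "p \<in> coneC a I"
    using coneC_memI[of I "\<lambda>i. if i \<in> J then s i else 0"] s coneC_restrict[OF fin JI, of s] by auto
qed

lemma coneC_sum_mem:
  assumes "finite K" "\<And>i. i \<in> K \<Longrightarrow> f i \<in> coneC a I"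
  shows "(\<Sum>i\<in>K. f i) \<in> coneC a I"
  using assms by (induction K rule: finite_induct) (auto intro: coneC_add coneC_0)

lemma face_scale:
  assumes F: "F face_of coneC a I" and F0: "0 \<in> F" and q: "q \<in> F" and c: "c \<ge> 0"
  shows "c *\<^sub>R q \<in> F"
proof (cases "c \<le> 1")
  case True
  have "convex F" using F face_of_imp_convex by blast
  then have "(1 - c) *\<^sub>R 0 + c *\<^sub>R q \<in> F" using convexD[OF \<open>convex F\<close> F0 q, of "1-c" c] c True by simp
  then show ?thesis by simp
next
  case False
  show ?thesis
  proof (cases "q = 0")
    case True then show ?thesis using q by simp
  next
    case q0: False
    have qS: "q \<in> coneC a I" using F q face_of_imp_subset by blast
    have "q \<in> open_segment 0 (c *\<^sub>R q)"
      unfolding in_segment using False q0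
      by (intro conjI exI[of _ "1/c"]) auto
    moreover have "c *\<^sub>R q \<in> coneC a I" using coneC_scale[OF qS] c by blast
    ultimately show ?thesis using face_ofD[OF F _ coneC_0] q by blast
  qed
qed

lemma face_add:
  assumes F: "F face_of coneC a I" and F0: "0 \<in> F" and p: "p \<in> F" and q: "q \<in> F"
  shows "p + q \<in> F"
proof -
  have "convex F" using F face_of_imp_convex by blast
  then have "(1/2) *\<^sub>R p + (1/2) *\<^sub>R q \<in> F" using p q convexD[of F p q "1/2" "1/2"] by simp
  from face_scale[OF F F0 this, of 2] show ?thesis by (simp add: scaleR_add_right)
qed

lemma face_contains_0:
  assumes F: "F face_of coneC a I" and Fne: "F \<noteq> {}"
  shows "0 \<in> F"
proof -
  obtain p where p: "p \<in> F" using Fne by blast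
  show ?thesis
  proof (cases "p = 0")
    case True then show ?thesis using p by simp
  next
    case False
    have pS: "p \<in> coneC a I" using F p face_of_imp_subset by blast
    have "p \<in> open_segment 0 (2 *\<^sub>R p)"
      unfolding in_segment using False by (intro conjI exI[of _ "1/2"]) auto
    moreover have "2 *\<^sub>R p \<in> coneC a I" using coneC_scale[OF pS] by simp
    ultimately show ?thesis using face_ofD[OF F _ coneC_0 _ p] by blast
  qed
qed

lemma face_sum_mem:
  assumes F: "F face_of coneC a I" and F0: "0 \<in> F"
    and K: "finite K" "\<And>i. i \<in> K \<Longrightarrow> a i \<in> F" "\<And>i. i \<in> K \<Longrightarrow> s i \<ge> 0"
  shows "(\<Sum>i\<in>K. s i *\<^sub>R a i) \<in> F"
  using K
proof (induction K rule: finite_induct)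
  case empty then show ?case using F0 by simp
next
  case (insert x K)
  then show ?case using face_add[OF F F0] face_scale[OF F F0] by simp
qed

lemma face_eq_coneC:
  assumes fin: "finite I" and F: "F face_of coneC a I" and Fne: "F \<noteq> {}"
  shows "F = coneC a {i\<in>I. a i \<in> F}"
proof
  have F0: "0 \<in> F" by (rule face_contains_0[OF F Fne])
  show "coneC a {i\<in>I. a i \<in> F} \<subseteq> F"
  proof
    fix p assume "p \<in> coneC a {i\<in>I. a i \<in> F}"
    then obtain s where s: "\<forall>i\<in>{i\<in>I. a i \<in> F}. s i \<ge> 0" "p = (\<Sum>i\<in>{i\<in>I. a i \<in> F}. s i *\<^sub>R a i)"
      unfolding coneC_iff by blast
    show "p \<in> F" unfolding s(2) by (rule face_sum_mem[OF F F0]) (use fin s(1) in auto)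
  qed
next
  show "F \<subseteq> coneC a {i\<in>I. a i \<in> F}"
  proof
    fix p assume pF: "p \<in> F"
    have F0: "0 \<in> F" by (rule face_contains_0[OF F Fne])
    have "p \<in> coneC a I" using pF F face_of_imp_subset by blast
    then obtain s where s: "\<forall>i\<in>I. s i \<ge> 0" "p = (\<Sum>i\<in>I. s i *\<^sub>R a i)" unfolding coneC_iff by blast
    have key: "a i \<in> F" if i: "i \<in> I" "s i > 0" for i
    proof -
      define r where "r = (\<Sum>j\<in>I - {i}. s j *\<^sub>R a j)"
      have rS: "r \<in> coneC a I"
        unfolding r_def by (rule coneC_sum_mem) (use fin s(1) coneC_scale coneC_gen in auto)
      have siS: "s i *\<^sub>R a i \<in> coneC a I" using coneC_scale[OF coneC_gen[OF fin i(1)]] i by simp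
      have pr: "p = s i *\<^sub>R a i + r" unfolding s(2) r_def using fin i(1) by (simp add: sum.remove)
      have "2 *\<^sub>R (s i *\<^sub>R a i) \<in> F"
      proof (cases "s i *\<^sub>R a i = r")
        case True
        then have "p = 2 *\<^sub>R (s i *\<^sub>R a i)" using pr by (simp add: scaleR_2)
        then show ?thesis using pF by simp
      next
        case False
        have ne: "2 *\<^sub>R (s i *\<^sub>R a i) \<noteq> 2 *\<^sub>R r" using False by (metis scaleR_cancel_left zero_neq_numeral)
        have "p \<in> open_segment (2 *\<^sub>R (s i *\<^sub>R a i)) (2 *\<^sub>R r)"
          unfolding in_segment using ne pr
          by (intro conjI exI[of _ "1/2"]) (simp_all add: scaleR_add_right)
        then show ?thesis using face_ofD[OF F _ _ _ pF] coneC_scale[OF siS, of 2] coneC_scale[OF rS, of 2] by auto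
      qed
      from face_scale[OF F F0 this, of "1 / (2 * s i)"] show ?thesis using i(2) by simp
    qed
    have "p = (\<Sum>i\<in>{i\<in>I. a i \<in> F}. s i *\<^sub>R a i)"
    proof -
      have "p = (\<Sum>i\<in>I. (if i \<in> {i\<in>I. a i \<in> F} then s i else 0) *\<^sub>R a i)"
        unfolding s(2) using key s(1) by (intro sum.cong) (auto simp: order.order_iff_strict)
      then show ?thesis using coneC_restrict[OF fin, of "{i\<in>I. a i \<in> F}" s] by auto
    qed
    then show "p \<in> coneC a {i\<in>I. a i \<in> F}" using coneC_memI[of "{i\<in>I. a i \<in> F}" s] s(1) by auto
  qed
qed

lemma coneC_eq_hull:
  assumes fin: "finite I"
  shows "coneC a I = convex_cone hull (a ` I)"
proof
  show "coneC a I \<subseteq> convex_cone hull (a ` I)"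
  proof
    fix p assume "p \<in> coneC a I"
    then obtain s where s: "\<forall>i\<in>I. s i \<ge> 0" "p = (\<Sum>i\<in>I. s i *\<^sub>R a i)" unfolding coneC_iff by blast
    have "(\<Sum>i\<in>K. s i *\<^sub>R a i) \<in> convex_cone hull (a ` I)" if "K \<subseteq> I" for K
      using finite_subset[OF that fin] that
    proof (induction K rule: finite_induct)
      case empty then show ?case by (simp add: convex_cone_hull_contains_0)
    next
      case (insert x K)
      have "s x *\<^sub>R a x \<in> convex_cone hull (a ` I)"
        using insert s(1) by (intro convex_cone_hull_mul hull_inc) auto
      then show ?case using insert by (simp add: convex_cone_hull_add)
    qed
    then show "p \<in> convex_cone hull (a ` I)" using s by simp
  qed
next
  have "convex_cone (coneC a I)"
    unfolding convex_cone_def conic_def using coneC_0 convex_coneC coneC_scale by blast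
  then show "convex_cone hull (a ` I) \<subseteq> coneC a I"
    using hull_minimal[of "a ` I" "coneC a I" convex_cone] coneC_gen[OF fin] by blast
qed

lemma face_exposing:
  assumes fin: "finite I" and F: "F face_of coneC a I" and Fne: "F \<noteq> {}"
  shows "\<exists>\<eta>. \<forall>i\<in>I. inner (a i) \<eta> \<le> 0 \<and> (inner (a i) \<eta> = 0 \<longleftrightarrow> a i \<in> F)"
proof -
  have "polyhedron (coneC a I)" unfolding coneC_eq_hull[OF fin]
    by (rule polyhedron_convex_cone_hull) (use fin in simp)
  then have "F exposed_face_of coneC a I" using exposed_face_of_polyhedron F by blast
  then obtain u b where u: "coneC a I \<subseteq> {x. u \<bullet> x \<le> b}" "F = coneC a I \<inter> {x. u \<bullet> x = b}"
    unfolding exposed_face_of_def by blast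
  have "0 \<in> F" by (rule face_contains_0[OF F Fne])
  then have b: "b = 0" using u(2) by simp
  show ?thesis
  proof (rule exI[of _ u], intro ballI conjI)
    fix i assume i: "i \<in> I"
    have ai: "a i \<in> coneC a I" by (rule coneC_gen[OF fin i])
    then show "inner (a i) u \<le> 0" using u(1) b by (auto simp: inner_commute)
    show "(inner (a i) u = 0) = (a i \<in> F)" using u(2) b ai by (auto simp: inner_commute)
  qed
qed

lemma rel_interior_coneC:
  assumes fin: "finite J"
  shows "rel_interior (coneC a J) = {(\<Sum>i\<in>J. s i *\<^sub>R a i) | s. \<forall>i\<in>J. s i > 0}"
proof -
  have cv: "convex (coneC a J)" and ne: "coneC a J \<noteq> {}" using convex_coneC coneC_0 by auto
  show ?thesis
  proof (intro set_eqI iffI)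
    fix z assume z: "z \<in> rel_interior (coneC a J)"
    define x where "x = (\<Sum>i\<in>J. 1 *\<^sub>R a i)"
    have "x \<in> coneC a J" unfolding x_def by (rule coneC_memI) simp
    then obtain e where e: "e > 1" "(1 - e) *\<^sub>R x + e *\<^sub>R z \<in> coneC a J"
      using z convex_rel_interior_iff[OF cv ne] by blast
    then obtain r where r: "\<forall>i\<in>J. r i \<ge> 0" "(1 - e) *\<^sub>R x + e *\<^sub>R z = (\<Sum>i\<in>J. r i *\<^sub>R a i)"
      unfolding coneC_iff by blast
    have z1: "z = (1/e) *\<^sub>R (((1 - e) *\<^sub>R x + e *\<^sub>R z) + (e - 1) *\<^sub>R x)"
      using e(1) by (simp add: algebra_simps)
    have z2: "(\<Sum>i\<in>J. r i *\<^sub>R a i) + (e - 1) *\<^sub>R x = (\<Sum>i\<in>J. (r i + (e - 1)) *\<^sub>R a i)"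
      unfolding x_def by (simp add: scaleR_sum_right sum.distrib scaleR_add_left)
    have "z = (\<Sum>i\<in>J. ((1/e) * (r i + (e - 1))) *\<^sub>R a i)"
      using z1 unfolding r(2) z2 by (simp add: scaleR_sum_right)
    then show "z \<in> {(\<Sum>i\<in>J. s i *\<^sub>R a i) | s. \<forall>i\<in>J. s i > 0}"
      using r(1) e(1) by (intro CollectI exI[of _ "\<lambda>i. (1/e) * (r i + (e - 1))"]) (auto intro!: mult_pos_pos add_nonneg_pos)
  next
    fix z assume "z \<in> {(\<Sum>i\<in>J. s i *\<^sub>R a i) | s. \<forall>i\<in>J. s i > 0}"
    then obtain s where s: "\<forall>i\<in>J. s i > 0" "z = (\<Sum>i\<in>J. s i *\<^sub>R a i)" by blast
    show "z \<in> rel_interior (coneC a J)"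
      unfolding convex_rel_interior_iff[OF cv ne]
    proof
      fix x assume "x \<in> coneC a J"
      then obtain t where t: "\<forall>i\<in>J. t i \<ge> 0" "x = (\<Sum>i\<in>J. t i *\<^sub>R a i)" unfolding coneC_iff by blast
      define S where "S = (\<Sum>i\<in>J. (t i + 1) / s i)"
      define \<delta> where "\<delta> = 1 / (1 + S)"
      have S0: "S \<ge> 0" unfolding S_def using s t by (intro sum_nonneg) auto
      have pos: "0 < 1 + S" using S0 by simp
      have \<delta>pos: "\<delta> > 0" unfolding \<delta>_def using pos by simp
      have coef: "(1 - (1 + \<delta>)) * t i + (1 + \<delta>) * s i \<ge> 0" if i: "i \<in> J" for i
      proof -
        have si: "s i > 0" using s i by auto
        have q: "(t i + 1) / s i \<le> 1 + S"
          using member_le_sum[of i J "\<lambda>i. (t i + 1) / s i"] i fin s t unfolding S_def by force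
        have "\<delta> * ((t i + 1) / s i) = ((t i + 1) / s i) / (1 + S)" by (simp add: \<delta>_def)
        also have "\<dots> \<le> 1" using q pos by (subst pos_divide_le_eq) auto
        finally have d1: "\<delta> * ((t i + 1) / s i) \<le> 1" .
        have "\<delta> * (t i + 1) = (\<delta> * ((t i + 1) / s i)) * s i" using si by simp
        also have "\<dots> \<le> 1 * s i" by (rule mult_right_mono[OF d1]) (use si in simp)
        finally have d2: "\<delta> * t i \<le> s i" using \<delta>pos by (simp add: algebra_simps)
        have d3: "\<delta> * s i \<ge> 0" using \<delta>pos si by simp
        have "(1 - (1 + \<delta>)) * t i + (1 + \<delta>) * s i = s i - \<delta> * t i + \<delta> * s i" by (simp add: algebra_simps)
        then show ?thesis using d2 d3 by linarith
      qed
      have "(1 - (1 + \<delta>)) *\<^sub>R x + (1 + \<delta>) *\<^sub>R z = (\<Sum>i\<in>J. ((1 - (1 + \<delta>)) * t i + (1 + \<delta>) * s i) *\<^sub>R a i)"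
        unfolding t(2) s(2) by (simp add: scaleR_sum_right sum.distrib[symmetric] sum_subtractf[symmetric] scaleR_add_left scaleR_diff_left)
      then have "(1 - (1 + \<delta>)) *\<^sub>R x + (1 + \<delta>) *\<^sub>R z \<in> coneC a J"
        using coneC_memI[of J "\<lambda>i. (1 - (1 + \<delta>)) * t i + (1 + \<delta>) * s i"] coef by auto
      then show "\<exists>e>1. (1 - e) *\<^sub>R x + e *\<^sub>R z \<in> coneC a J" using \<delta>pos by (intro exI[of _ "1 + \<delta>"]) auto
    qed
  qed
qed

lemma face_from_condition:
  assumes fin: "finite I" and JI: "J \<subseteq> I"
    and H: "\<And>s. (\<forall>i\<in>I. s i \<ge> 0) \<Longrightarrow> (\<Sum>i\<in>I. s i *\<^sub>R a i) \<in> coneC a J \<Longrightarrow> \<forall>i\<in>I - J. s i = 0"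
  shows "coneC a J face_of coneC a I" "{i\<in>I. a i \<in> coneC a J} = J"
proof -
  have finJ: "finite J" using finite_subset[OF JI fin] .
  show "coneC a J face_of coneC a I"
    unfolding face_of_def
  proof (intro conjI ballI impI)
    show "coneC a J \<subseteq> coneC a I" by (rule coneC_mono[OF fin JI])
    show "convex (coneC a J)" by (rule convex_coneC)
    fix p q x assume p: "p \<in> coneC a I" and q: "q \<in> coneC a I" and x: "x \<in> coneC a J" and xs: "x \<in> open_segment p q"
    obtain s where s: "\<forall>i\<in>I. s i \<ge> 0" "p = (\<Sum>i\<in>I. s i *\<^sub>R a i)" using p unfolding coneC_iff by blast
    obtain t where t: "\<forall>i\<in>I. t i \<ge> 0" "q = (\<Sum>i\<in>I. t i *\<^sub>R a i)" using q unfolding coneC_iff by blast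
    obtain u where u: "0 < u" "u < 1" "x = (1 - u) *\<^sub>R p + u *\<^sub>R q" using xs unfolding in_segment by blast
    have "(1 - u) *\<^sub>R p + u *\<^sub>R q = (\<Sum>i\<in>I. ((1 - u) * s i + u * t i) *\<^sub>R a i)"
      unfolding s(2) t(2) by (simp add: scaleR_sum_right sum.distrib[symmetric] scaleR_add_left)
    then have xJ: "(\<Sum>i\<in>I. ((1 - u) * s i + u * t i) *\<^sub>R a i) \<in> coneC a J" using x u(3) by simp
    have z: "\<forall>i\<in>I - J. (1 - u) * s i + u * t i = 0"
      by (rule H[OF _ xJ]) (use s(1) t(1) u(1,2) in auto)
    have st0: "s i = 0 \<and> t i = 0" if "i \<in> I - J" for i
    proof -
      have n: "(1 - u) * s i \<ge> 0" "u * t i \<ge> 0" using s(1) t(1) u that by auto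
      have e: "(1 - u) * s i + u * t i = 0" using z that by blast
      have "(1 - u) * s i = 0" "u * t i = 0" using n e by linarith+
      moreover have "1 - u \<noteq> 0" "u \<noteq> 0" using u by auto
      ultimately show ?thesis by simp
    qed
    have "p = (\<Sum>i\<in>I. (if i \<in> J then s i else 0) *\<^sub>R a i)" unfolding s(2)
      by (rule sum.cong) (use st0 in auto)
    then have "p = (\<Sum>i\<in>J. s i *\<^sub>R a i)" using coneC_restrict[OF fin JI] by simp
    then show "p \<in> coneC a J" using coneC_memI[of J s] s(1) JI by auto
    have "q = (\<Sum>i\<in>I. (if i \<in> J then t i else 0) *\<^sub>R a i)" unfolding t(2)
      by (rule sum.cong) (use st0 in auto)
    then have "q = (\<Sum>i\<in>J. t i *\<^sub>R a i)" using coneC_restrict[OF fin JI] by simp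
    then show "q \<in> coneC a J" using coneC_memI[of J t] t(1) JI by auto
  qed
  show "{i\<in>I. a i \<in> coneC a J} = J"
  proof (intro set_eqI iffI)
    fix i assume "i \<in> J" then show "i \<in> {i\<in>I. a i \<in> coneC a J}" using JI coneC_gen[OF finJ] by auto
  next
    fix i assume i: "i \<in> {i\<in>I. a i \<in> coneC a J}"
    show "i \<in> J"
    proof (rule ccontr)
      assume "i \<notin> J"
      have "(\<Sum>j\<in>I. (if j = i then 1 else 0) *\<^sub>R a j) = (\<Sum>j\<in>I. if j = i then a j else 0)"
        by (rule sum.cong) auto
      also have "\<dots> = a i" using fin i by (simp add: sum.delta')
      finally have "(\<Sum>j\<in>I. (if j = i then 1 else 0) *\<^sub>R a j) \<in> coneC a J" using i by simp
      then have "\<forall>j\<in>I - J. (if j = i then 1 else 0::real) = 0"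
        by (rule H[rotated]) auto
      then have "(if i = i then 1 else 0::real) = 0" using i \<open>i \<notin> J\<close> by blast
      then show False by simp
    qed
  qed
qed

end

lemma exp_sq_bound: "(u::real) \<ge> 0 \<Longrightarrow> exp (2 * u) \<ge> u\<^sup>2"
proof -
  assume u: "u \<ge> 0"
  have "exp (2 * u) = exp u * exp u" by (simp add: exp_add[symmetric])
  also have "\<dots> \<ge> (1 + u) * (1 + u)" using u by (intro mult_mono) auto
  finally show ?thesis using u by (simp add: power2_eq_square algebra_simps)
qed

lemma f_lower:
  fixes w s u :: real
  assumes w: "w > 0" and s: "s > 0"
  shows "w * exp (2 * u) / 2 - s * u \<ge> - (s\<^sup>2 / (2 * w))"
proof (cases "u \<ge> 0")
  case True
  have "w * exp (2 * u) / 2 \<ge> w * u\<^sup>2 / 2" using exp_sq_bound[OF True] w by simp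
  moreover have "w * u\<^sup>2 / 2 - s * u + s\<^sup>2 / (2 * w) = (w / 2) * (u - s / w)\<^sup>2"
    using w by (simp add: power2_eq_square field_simps)
  moreover have "(w / 2) * (u - s / w)\<^sup>2 \<ge> 0" using w by simp
  ultimately show ?thesis by linarith
next
  case False
  have "w * exp (2 * u) / 2 > 0" using w by simp
  moreover have "- s * u \<ge> 0" using False s by (simp add: mult_nonneg_nonpos)
  moreover have "s\<^sup>2 / (2 * w) \<ge> 0" using w by simp
  ultimately show ?thesis by linarith
qed

lemma f_bound:
  fixes w s u R :: real
  assumes w: "w > 0" and s: "s > 0" and f: "w * exp (2 * u) / 2 - s * u \<le> R"
  shows "\<bar>u\<bar> \<le> 1 + 4 * s / w + 4 * \<bar>R\<bar> / w + \<bar>R\<bar> / s"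
proof (cases "u \<ge> 0")
  case False
  have "w * exp (2 * u) / 2 > 0" using w by simp
  then have "s * (- u) \<le> R" using f by linarith
  then have "- u \<le> R / s" using s by (simp add: pos_le_divide_eq mult.commute)
  moreover have "R / s \<le> \<bar>R\<bar> / s" using s by (simp add: divide_right_mono)
  moreover have "0 \<le> 4 * s / w" "0 \<le> 4 * \<bar>R\<bar> / w" using s w by auto
  ultimately show ?thesis using False by linarith
next
  case True
  have q: "w * u\<^sup>2 / 2 - s * u \<le> R"
    using f exp_sq_bound[OF True] w by (smt (verit) mult_left_mono divide_right_mono)
  have nn: "0 \<le> 4 * s / w" "0 \<le> 4 * \<bar>R\<bar> / w" "0 \<le> \<bar>R\<bar> / s" using s w by auto
  show ?thesis
  proof (cases "u \<le> 1 \<or> u \<le> 4 * s / w")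
    case True
    then show ?thesis using nn \<open>u \<ge> 0\<close> by auto
  next
    case False
    then have u1: "u > 1" and u2: "u > 4 * s / w" by auto
    have "w * u > 4 * s" using u2 w by (simp add: pos_divide_less_eq mult.commute)
    then have "w * u / 2 - s \<ge> w * u / 4" by linarith
    then have "u * (w * u / 2 - s) \<ge> u * (w * u / 4)" using u1 by (intro mult_left_mono) auto
    moreover have "u * (w * u / 4) \<ge> 1 * (w * u / 4)" using u1 w by (intro mult_right_mono) auto
    moreover have "u * (w * u / 2 - s) = w * u\<^sup>2 / 2 - s * u" by (simp add: power2_eq_square algebra_simps)
    ultimately have "w * u / 4 \<le> R" using q by linarith
    then have "u \<le> 4 * R / w" using w by (simp add: pos_le_divide_eq mult.commute)
    moreover have "4 * R / w \<le> 4 * \<bar>R\<bar> / w" using w by (simp add: divide_right_mono)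
    ultimately show ?thesis using nn \<open>u \<ge> 0\<close> by auto
  qed
qed


lemma exp_mono_term: "(exp (2 * u) - exp (2 * u')) * (u - u') \<ge> (0::real)"
proof (cases "u \<le> u'")
  case True
  then have "exp (2 * u) - exp (2 * u') \<le> 0" by simp
  then show ?thesis using True by (simp add: mult_nonpos_nonpos)
next
  case False
  then have "exp (2 * u) - exp (2 * u') \<ge> 0" by simp
  then show ?thesis using False by simp
qed

lemma exp_mono_term_eq: "(exp (2 * u) - exp (2 * u')) * (u - u') = (0::real) \<Longrightarrow> u = u'"
proof -
  assume "(exp (2 * u) - exp (2 * u')) * (u - u') = 0"
  then have "exp (2 * u) - exp (2 * u') = 0 \<or> u - u' = 0" by simp
  then show "u = u'"
  proof
    assume "exp (2 * u) - exp (2 * u') = 0"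
    then have "exp (2 * u) = exp (2 * u')" by simp
    then have "2 * u = 2 * u'" by (simp only: exp_inj_iff)
    then show ?thesis by simp
  qed simp
qed

lemma exp_inj:
  fixes a :: "'i \<Rightarrow> 'a::euclidean_space"
  assumes fin: "finite J" and w: "\<forall>i\<in>J. w i > 0"
    and eq: "(\<Sum>i\<in>J. (w i * exp (2 * inner (a i) \<xi>)) *\<^sub>R a i) = (\<Sum>i\<in>J. (w i * exp (2 * inner (a i) \<eta>)) *\<^sub>R a i)"
  shows "\<forall>i\<in>J. inner (a i) \<xi> = inner (a i) \<eta>"
proof -
  define X where "X = (\<Sum>i\<in>J. (w i * exp (2 * inner (a i) \<xi>)) *\<^sub>R a i)"
  define Y where "Y = (\<Sum>i\<in>J. (w i * exp (2 * inner (a i) \<eta>)) *\<^sub>R a i)"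
  define t where "t i = w i * ((exp (2 * inner (a i) \<xi>) - exp (2 * inner (a i) \<eta>)) * (inner (a i) \<xi> - inner (a i) \<eta>))" for i
  have "inner X (\<xi> - \<eta>) - inner Y (\<xi> - \<eta>) =
     (\<Sum>i\<in>J. (w i * exp (2 * inner (a i) \<xi>)) * (inner (a i) \<xi> - inner (a i) \<eta>) - (w i * exp (2 * inner (a i) \<eta>)) * (inner (a i) \<xi> - inner (a i) \<eta>))"
  proof -
    have "inner X (\<xi> - \<eta>) = (\<Sum>i\<in>J. (w i * exp (2 * inner (a i) \<xi>)) * (inner (a i) \<xi> - inner (a i) \<eta>))"
      unfolding X_def inner_sum_left by (rule sum.cong) (simp_all add: inner_diff_right right_diff_distrib)
    moreover have "inner Y (\<xi> - \<eta>) = (\<Sum>i\<in>J. (w i * exp (2 * inner (a i) \<eta>)) * (inner (a i) \<xi> - inner (a i) \<eta>))"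
      unfolding Y_def inner_sum_left by (rule sum.cong) (simp_all add: inner_diff_right right_diff_distrib)
    ultimately show ?thesis by (simp only: sum_subtractf)
  qed
  also have "\<dots> = (\<Sum>i\<in>J. t i)" unfolding t_def by (rule sum.cong) (simp_all add: algebra_simps)
  finally have s0: "(\<Sum>i\<in>J. t i) = 0" using eq unfolding X_def Y_def by simp
  have tn: "t i \<ge> 0" if "i \<in> J" for i
    unfolding t_def using w that exp_mono_term[of "inner (a i) \<xi>" "inner (a i) \<eta>"] by (simp add: mult_nonneg_nonneg less_imp_le)
  have t0: "\<forall>i\<in>J. t i = 0" using sum_nonneg_eq_0_iff[OF fin, of t] tn s0 by simp
  show ?thesis
  proof
    fix i assume i: "i \<in> J"
    have "w i \<noteq> 0" using w i by auto
    moreover have "t i = 0" using t0 i by blast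
    ultimately show "inner (a i) \<xi> = inner (a i) \<eta>" unfolding t_def by (metis exp_mono_term_eq mult_eq_0_iff)
  qed
qed

lemma exp_surj:
  fixes a :: "'i \<Rightarrow> 'a::euclidean_space"
  assumes fin: "finite J" and w: "\<forall>i\<in>J. w i > 0" and s: "\<forall>i\<in>J. s i > 0"
  shows "\<exists>\<xi>. (\<Sum>i\<in>J. (w i * exp (2 * inner (a i) \<xi>)) *\<^sub>R a i) = (\<Sum>i\<in>J. s i *\<^sub>R a i)"
proof -
  define W where "W = span (a ` J)"
  define \<phi> where "\<phi> \<xi> = (\<Sum>i\<in>J. w i * exp (2 * inner (a i) \<xi>) / 2 - s i * inner (a i) \<xi>)" for \<xi>
  define m where "m = (\<Sum>i\<in>J. (s i)\<^sup>2 / (2 * w i))"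
  define R where "R = \<phi> 0 + m"
  define T where "T \<xi> = (\<Sum>i\<in>J. inner (a i) \<xi> *\<^sub>R a i)" for \<xi>
  define K where "K = W \<inter> {\<xi>. \<phi> \<xi> \<le> \<phi> 0}"
  have subW: "subspace W" unfolding W_def by simp
  have clW: "closed W" using closed_subspace[OF subW] .
  have cont\<phi>: "continuous_on UNIV \<phi>" unfolding \<phi>_def by (intro continuous_intros) auto
  have "linear T" unfolding T_def
    by (intro linear_compose_sum) (auto simp: linear_iff inner_add_right scaleR_add_left)
  then have blT: "bounded_linear T" by (simp add: linear_conv_bounded_linear)
  have Tinj: "\<forall>x\<in>W. T x = 0 \<longrightarrow> x = 0"
  proof (intro ballI impI)
    fix x assume xW: "x \<in> W" and Tx: "T x = 0"
    have "inner (T x) x = (\<Sum>i\<in>J. (inner (a i) x)\<^sup>2)"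
      unfolding T_def by (simp add: inner_sum_left power2_eq_square)
    then have "(\<Sum>i\<in>J. (inner (a i) x)\<^sup>2) = 0" using Tx by simp
    then have z: "\<forall>i\<in>J. inner (a i) x = 0" using sum_nonneg_eq_0_iff[OF fin, of "\<lambda>i. (inner (a i) x)\<^sup>2"] by simp
    have "orthogonal x x"
      by (rule orthogonal_to_span[of x "a ` J" x]) (use xW z in \<open>auto simp: W_def orthogonal_def inner_commute\<close>)
    then show "x = 0" by (simp add: orthogonal_def)
  qed
  obtain e where e: "e > 0" "\<forall>x\<in>W. norm (T x) \<ge> e * norm x"
    using injective_imp_isometric[OF clW subW blT Tinj] by blast
  define B where "B = (\<Sum>i\<in>J. (1 + 4 * s i / w i + 4 * \<bar>R\<bar> / w i + \<bar>R\<bar> / s i) * norm (a i))"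
  have Kb: "norm \<xi> \<le> B / e" if \<xi>: "\<xi> \<in> K" for \<xi>
  proof -
    have fi: "w i * exp (2 * inner (a i) \<xi>) / 2 - s i * inner (a i) \<xi> \<le> R" if i: "i \<in> J" for i
    proof -
      have "\<phi> \<xi> = (w i * exp (2 * inner (a i) \<xi>) / 2 - s i * inner (a i) \<xi>) +
            (\<Sum>j\<in>J - {i}. w j * exp (2 * inner (a j) \<xi>) / 2 - s j * inner (a j) \<xi>)"
        unfolding \<phi>_def using fin i by (simp add: sum.remove)
      moreover have "(\<Sum>j\<in>J - {i}. w j * exp (2 * inner (a j) \<xi>) / 2 - s j * inner (a j) \<xi>) \<ge> (\<Sum>j\<in>J - {i}. - ((s j)\<^sup>2 / (2 * w j)))"
        by (rule sum_mono) (use f_lower w s in auto)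
      moreover have "(\<Sum>j\<in>J - {i}. (s j)\<^sup>2 / (2 * w j)) \<le> m"
        unfolding m_def by (rule sum_mono2[OF fin]) (use w in auto)
      moreover have "\<phi> \<xi> \<le> \<phi> 0" using \<xi> unfolding K_def by auto
      ultimately show ?thesis unfolding R_def by (simp add: sum_negf)
    qed
    have "norm (T \<xi>) \<le> (\<Sum>i\<in>J. norm (inner (a i) \<xi> *\<^sub>R a i))" unfolding T_def by (rule norm_sum)
    also have "\<dots> \<le> B" unfolding B_def
    proof (rule sum_mono)
      fix i assume i: "i \<in> J"
      have "\<bar>inner (a i) \<xi>\<bar> \<le> 1 + 4 * s i / w i + 4 * \<bar>R\<bar> / w i + \<bar>R\<bar> / s i"
        using f_bound[of "w i" "s i" "inner (a i) \<xi>" R] w s i fi[OF i] by auto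
      then show "norm (inner (a i) \<xi> *\<^sub>R a i) \<le> (1 + 4 * s i / w i + 4 * \<bar>R\<bar> / w i + \<bar>R\<bar> / s i) * norm (a i)"
        by (simp add: mult_right_mono)
    qed
    finally have "e * norm \<xi> \<le> B" using e \<xi> unfolding K_def by force
    then show ?thesis using e(1) by (simp add: pos_le_divide_eq mult.commute)
  qed
  have cK: "compact K"
    unfolding compact_eq_bounded_closed
  proof
    show "bounded K" unfolding bounded_iff using Kb by blast
    show "closed K" unfolding K_def
      by (intro closed_Int clW closed_Collect_le continuous_intros) (use cont\<phi> in \<open>auto simp: continuous_on_const\<close>)
  qed
  have K0: "0 \<in> K" unfolding K_def by (simp add: subspace_0[OF subW])
  obtain \<xi>0 where \<xi>0: "\<xi>0 \<in> K" "\<forall>y\<in>K. \<phi> \<xi>0 \<le> \<phi> y"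
    using continuous_attains_inf[OF cK _ continuous_on_subset[OF cont\<phi>]] K0 by blast
  have minW: "\<phi> \<xi>0 \<le> \<phi> y" if "y \<in> W" for y
  proof (cases "\<phi> y \<le> \<phi> 0")
    case True then show ?thesis using \<xi>0 that unfolding K_def by auto
  next
    case False then show ?thesis using \<xi>0(2) K0 by force
  qed
  define g where "g = (\<Sum>i\<in>J. (w i * exp (2 * inner (a i) \<xi>0)) *\<^sub>R a i) - (\<Sum>i\<in>J. s i *\<^sub>R a i)"
  have gW: "g \<in> W" unfolding g_def W_def
    by (intro span_diff span_sum span_scale span_base) auto
  have \<xi>0W: "\<xi>0 \<in> W" using \<xi>0 unfolding K_def by auto
  define h where "h t = \<phi> (\<xi>0 + t *\<^sub>R g)" for t
  have hmin: "h 0 \<le> h t" for t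
    unfolding h_def using minW[of "\<xi>0 + t *\<^sub>R g"] subspace_add[OF subW \<xi>0W subspace_scale[OF subW gW]] by simp
  have heq: "h t = (\<Sum>i\<in>J. w i * exp (2 * (inner (a i) \<xi>0 + t * inner (a i) g)) / 2 - s i * (inner (a i) \<xi>0 + t * inner (a i) g))" for t
    unfolding h_def \<phi>_def by (simp add: inner_add_right)
  have "(h has_real_derivative (\<Sum>i\<in>J. w i * exp (2 * (inner (a i) \<xi>0 + 0 * inner (a i) g)) * (2 * inner (a i) g) / 2 - s i * inner (a i) g)) (at 0)"
    unfolding heq[abs_def]
    by (intro DERIV_sum) (auto intro!: derivative_eq_intros)
  moreover have "(\<Sum>i\<in>J. w i * exp (2 * (inner (a i) \<xi>0 + 0 * inner (a i) g)) * (2 * inner (a i) g) / 2 - s i * inner (a i) g) = inner g g"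
  proof -
    have "inner g g = (\<Sum>i\<in>J. (w i * exp (2 * inner (a i) \<xi>0)) * inner (a i) g) - (\<Sum>i\<in>J. s i * inner (a i) g)"
      by (subst (1) g_def) (simp add: inner_diff_right inner_sum_right inner_commute)
    then show ?thesis by (simp add: sum_subtractf algebra_simps)
  qed
  ultimately have d: "(h has_real_derivative inner g g) (at 0)" by simp
  have "inner g g = 0" by (rule DERIV_local_min[OF d, of 1]) (use hmin in auto)
  then have "g = 0" by simp
  then show ?thesis unfolding g_def by auto
qed

locale setting =
  fixes act :: "'a::euclidean_space \<Rightarrow> 'v::euclidean_space \<Rightarrow> 'v"
    and v :: "'i::finite \<Rightarrow> 'v"
    and \<alpha> :: "'i \<Rightarrow> 'a \<Rightarrow> real"
  assumes act_lin: "\<And>\<xi>. linear (act \<xi>)"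
    and v_orth: "\<And>i j. inner (v i) (v j) = (if i = j then 1 else 0)"
    and v_span: "span (range v) = UNIV"
    and \<alpha>_lin: "\<And>i. linear (\<alpha> i)"
    and v_eig: "\<And>\<xi> i. act \<xi> (v i) = \<alpha> i \<xi> *\<^sub>R v i"
begin

definition a :: "'i \<Rightarrow> 'a" where "a i = dual_vec (\<alpha> i)"
definition E :: "'a \<Rightarrow> 'v \<Rightarrow> 'v" where "E \<xi> y = (\<Sum>i\<in>UNIV. (exp (inner (a i) \<xi>) * inner y (v i)) *\<^sub>R v i)"

lemma a_fun: "(\<lambda>i. dual_vec (\<alpha> i)) = a"
  by (rule ext) (simp add: a_def)

lemma coord_sum: "inner (\<Sum>i\<in>UNIV. f i *\<^sub>R v i) (v j) = f j"
  by (simp add: inner_sum_left v_orth if_distrib cong: if_cong)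

lemma v_expand: "y = (\<Sum>i\<in>UNIV. inner y (v i) *\<^sub>R v i)"
proof -
  define z where "z = y - (\<Sum>i\<in>UNIV. inner y (v i) *\<^sub>R v i)"
  have zj: "inner z (v j) = 0" for j unfolding z_def by (simp add: inner_diff_left coord_sum)
  have "orthogonal z z"
    by (rule orthogonal_to_span[of z "range v" z]) (use v_span zj in \<open>auto simp: orthogonal_def\<close>)
  then have "z = 0" by (simp add: orthogonal_def)
  then show ?thesis unfolding z_def by simp
qed

lemma coord_eq: "(\<And>j. inner y (v j) = inner z (v j)) \<Longrightarrow> y = z"
  using v_expand[of y] v_expand[of z] by simp

lemma \<alpha>_eq: "\<alpha> i \<xi> = inner (a i) \<xi>"
proof -
  have "\<alpha> i \<xi> = \<alpha> i (\<Sum>b\<in>Basis. inner \<xi> b *\<^sub>R b)" by (simp add: euclidean_representation)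
  also have "\<dots> = (\<Sum>b\<in>Basis. inner \<xi> b * \<alpha> i b)" using \<alpha>_lin[of i] by (simp add: linear_sum linear_scale)
  also have "\<dots> = (\<Sum>b\<in>Basis. \<alpha> i b * inner b \<xi>)" by (simp add: inner_commute mult.commute)
  also have "\<dots> = inner (a i) \<xi>" unfolding a_def dual_vec_def by (simp add: inner_sum_left)
  finally show ?thesis .
qed

lemma act_expand: "act \<xi> y = (\<Sum>i\<in>UNIV. (inner (a i) \<xi> * inner y (v i)) *\<^sub>R v i)"
proof -
  have "act \<xi> y = act \<xi> (\<Sum>i\<in>UNIV. inner y (v i) *\<^sub>R v i)" using v_expand[of y] by simp
  also have "\<dots> = (\<Sum>i\<in>UNIV. inner y (v i) *\<^sub>R act \<xi> (v i))" using act_lin by (simp add: linear_sum linear_scale)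
  also have "\<dots> = (\<Sum>i\<in>UNIV. (inner (a i) \<xi> * inner y (v i)) *\<^sub>R v i)" by (simp add: v_eig \<alpha>_eq mult.commute)
  finally show ?thesis .
qed

lemma act_pow: "(act \<xi> ^^ n) y = (\<Sum>i\<in>UNIV. (inner (a i) \<xi> ^ n * inner y (v i)) *\<^sub>R v i)"
proof (induction n)
  case 0
  then show ?case using v_expand[of y] by simp
next
  case (Suc n)
  have "(act \<xi> ^^ Suc n) y = act \<xi> ((act \<xi> ^^ n) y)" by simp
  also have "\<dots> = (\<Sum>i\<in>UNIV. (inner (a i) \<xi> * (inner (a i) \<xi> ^ n * inner y (v i))) *\<^sub>R v i)"
    unfolding Suc by (subst act_expand) (simp add: coord_sum)
  finally show ?case by (simp add: mult.assoc)
qed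

lemma op_exp_eq: "op_exp (act \<xi>) y = E \<xi> y"
proof -
  define X where "X i n = (inner (a i) \<xi>) ^ n /\<^sub>R fact n" for i n
  have sX: "summable (X i)" for i unfolding X_def by (rule summable_exp_generic)
  have "op_exp (act \<xi>) y = (\<Sum>n. \<Sum>i\<in>UNIV. (X i n * inner y (v i)) *\<^sub>R v i)"
    unfolding op_exp_def act_pow X_def by (simp add: scaleR_sum_right divide_inverse mult_ac)
  also have "\<dots> = (\<Sum>i\<in>UNIV. \<Sum>n. (X i n * inner y (v i)) *\<^sub>R v i)"
    by (rule suminf_sum) (intro summable_scaleR_left summable_mult2 sX)
  also have "\<dots> = (\<Sum>i\<in>UNIV. (suminf (X i) * inner y (v i)) *\<^sub>R v i)"
  proof (rule sum.cong[OF refl])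
    fix i
    show "(\<Sum>n. (X i n * inner y (v i)) *\<^sub>R v i) = (suminf (X i) * inner y (v i)) *\<^sub>R v i"
      by (subst suminf_mult2[OF sX]) (rule suminf_scaleR_left[OF summable_mult2[OF sX], symmetric])
  qed
  also have "\<dots> = E \<xi> y" unfolding E_def X_def by (simp add: exp_def)
  finally show ?thesis .
qed

lemma orbit_eq: "orbitA act y = range (\<lambda>\<xi>. E \<xi> y)"
  unfolding orbitA_def op_exp_eq by auto

lemma E_coord: "inner (E \<xi> y) (v j) = exp (inner (a j) \<xi>) * inner y (v j)"
  unfolding E_def by (rule coord_sum)

lemma mu_eq: "mu_a act y = (\<Sum>i\<in>UNIV. (inner y (v i))\<^sup>2 *\<^sub>R a i)"
proof -
  have "inner (act \<xi> y) y = (\<Sum>i\<in>UNIV. (inner y (v i))\<^sup>2 * \<alpha> i \<xi>)" for \<xi>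
    unfolding act_expand by (simp add: inner_sum_left inner_sum_right \<alpha>_eq power2_eq_square inner_commute mult_ac)
  then have "mu_a act y = (\<Sum>b\<in>Basis. (\<Sum>i\<in>UNIV. (inner y (v i))\<^sup>2 * \<alpha> i b) *\<^sub>R b)"
    unfolding mu_a_def dual_vec_def by simp
  also have "\<dots> = (\<Sum>i\<in>UNIV. (inner y (v i))\<^sup>2 *\<^sub>R (\<Sum>b\<in>Basis. \<alpha> i b *\<^sub>R b))"
    by (simp add: scaleR_sum_left scaleR_sum_right sum.swap[of _ Basis])
  also have "\<dots> = (\<Sum>i\<in>UNIV. (inner y (v i))\<^sup>2 *\<^sub>R a i)" by (simp add: a_def dual_vec_def)
  finally show ?thesis .
qed

lemma mu_E: "mu_a act (E \<xi> y) = (\<Sum>i\<in>UNIV. (exp (2 * inner (a i) \<xi>) * (inner y (v i))\<^sup>2) *\<^sub>R a i)"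
proof -
  have e2: "exp (2 * u) = exp u * exp u" for u :: real by (simp only: mult_2 exp_add)
  show ?thesis unfolding mu_eq E_coord by (rule sum.cong) (simp_all add: e2 power2_eq_square mult_ac)
qed

lemma E_E: "E \<zeta> (E \<xi> y) = E (\<zeta> + \<xi>) y"
  by (rule coord_eq) (simp add: E_coord inner_add_right exp_add)

lemma mu_smooth: "smooth_on UNIV (mu_a act)"
proof -
  have "smooth_on UNIV (\<lambda>y. \<Sum>i\<in>UNIV. (inner y (v i) * inner y (v i)) *\<^sub>R a i)"
    using bounded_linear.linear[OF bounded_linear_inner_left]
    by (intro smooth_on_sum smooth_on_scaleR smooth_on_mult smooth_on_const smooth_on_linear open_UNIV) auto
  then show ?thesis by (rule smooth_on_cong) (simp add: mu_eq power2_eq_square)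
qed

end

locale setting_x = setting act v \<alpha>
  for act :: "'a::euclidean_space \<Rightarrow> 'v::euclidean_space \<Rightarrow> 'v"
    and v :: "'i::finite \<Rightarrow> 'v"
    and \<alpha> :: "'i \<Rightarrow> 'a \<Rightarrow> real" +
  fixes x :: "'v"
begin

definition c where "c i = inner x (v i)"
definition Jf where "Jf F = {i \<in> supp v x. a i \<in> F}"
definition vF where "vF F = (\<Sum>i\<in>Jf F. c i *\<^sub>R v i)"

abbreviation "I \<equiv> supp v x"

lemma I_eq: "i \<in> I \<longleftrightarrow> c i \<noteq> 0"
  by (simp add: supp_def c_def)

lemma Jf_sub: "Jf F \<subseteq> I" unfolding Jf_def by auto

lemma vF_coord: "inner (vF F) (v j) = (if j \<in> Jf F then c j else 0)"
proof -
  have "inner (vF F) (v j) = (\<Sum>i\<in>Jf F. c i * (if i = j then 1 else 0))"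
    unfolding vF_def by (simp add: inner_sum_left v_orth)
  also have "\<dots> = (\<Sum>i\<in>Jf F. if i = j then c i else 0)" by (rule sum.cong) auto
  also have "\<dots> = (if j \<in> Jf F then c j else 0)" by (simp add: sum.delta')
  finally show ?thesis .
qed

lemma face_J: "F face_of coneC a I \<Longrightarrow> F \<noteq> {} \<Longrightarrow> F = coneC a (Jf F)"
  unfolding Jf_def by (rule face_eq_coneC) auto

lemma orbit_vF_disjoint:
  assumes F: "F face_of coneC a I" "F \<noteq> {}" and F': "F' face_of coneC a I" "F' \<noteq> {}"
    and ne: "F \<noteq> F'"
  shows "orbitA act (vF F) \<inter> orbitA act (vF F') = {}"
proof (rule ccontr)
  assume "orbitA act (vF F) \<inter> orbitA act (vF F') \<noteq> {}"
  then obtain \<xi> \<xi>' where eq: "E \<xi> (vF F) = E \<xi>' (vF F')" unfolding orbit_eq by auto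
  have "j \<in> Jf F \<longleftrightarrow> j \<in> Jf F'" for j
  proof -
    have "inner (E \<xi> (vF F)) (v j) = inner (E \<xi>' (vF F')) (v j)" using eq by simp
    then have "exp (inner (a j) \<xi>) * (if j \<in> Jf F then c j else 0) = exp (inner (a j) \<xi>') * (if j \<in> Jf F' then c j else 0)"
      by (simp add: E_coord vF_coord)
    moreover have "j \<in> Jf F \<Longrightarrow> c j \<noteq> 0" "j \<in> Jf F' \<Longrightarrow> c j \<noteq> 0" using Jf_sub I_eq by blast+
    ultimately show ?thesis by (auto split: if_splits)
  qed
  then have "Jf F = Jf F'" by blast
  then show False using face_J[OF F] face_J[OF F'] ne by simp
qed

definition w where "w i = (c i)\<^sup>2"

lemma w_pos: "i \<in> I \<Longrightarrow> w i > 0" unfolding w_def using I_eq by simp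

lemma mu_E_vF: "mu_a act (E \<xi> (vF F)) = (\<Sum>i\<in>Jf F. (w i * exp (2 * inner (a i) \<xi>)) *\<^sub>R a i)"
proof -
  have "mu_a act (E \<xi> (vF F)) = (\<Sum>i\<in>UNIV. if i \<in> Jf F then (w i * exp (2 * inner (a i) \<xi>)) *\<^sub>R a i else 0)"
    unfolding mu_E vF_coord w_def by (rule sum.cong) auto
  also have "\<dots> = (\<Sum>i\<in>Jf F. (w i * exp (2 * inner (a i) \<xi>)) *\<^sub>R a i)"
    by (simp add: sum.If_cases)
  finally show ?thesis .
qed

lemma E_vF_eq: "(\<forall>i\<in>Jf F. inner (a i) \<xi> = inner (a i) \<xi>') \<Longrightarrow> E \<xi> (vF F) = E \<xi>' (vF F)"
  by (rule coord_eq) (simp add: E_coord vF_coord)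

lemma bij_mu:
  assumes F: "F face_of coneC a I" "F \<noteq> {}"
  shows "bij_betw (mu_a act) (orbitA act (vF F)) (rel_interior F)"
proof -
  define J where "J = Jf F"
  have FJ: "F = coneC a J" unfolding J_def by (rule face_J[OF F])
  have finJ: "finite J" by simp
  have wJ: "\<forall>i\<in>J. w i > 0" using w_pos Jf_sub unfolding J_def by blast
  have ri: "rel_interior F = {(\<Sum>i\<in>J. s i *\<^sub>R a i) | s. \<forall>i\<in>J. s i > 0}"
    unfolding FJ by (rule rel_interior_coneC[OF finJ])
  show ?thesis
    unfolding bij_betw_def
  proof
    show "inj_on (mu_a act) (orbitA act (vF F))"
    proof (rule inj_onI)
      fix p q assume "p \<in> orbitA act (vF F)" "q \<in> orbitA act (vF F)" and pq: "mu_a act p = mu_a act q"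
      then obtain \<xi> \<xi>' where p: "p = E \<xi> (vF F)" and q: "q = E \<xi>' (vF F)" unfolding orbit_eq by auto
      have "\<forall>i\<in>J. inner (a i) \<xi> = inner (a i) \<xi>'"
        by (rule exp_inj[OF finJ wJ]) (use pq in \<open>simp add: p q mu_E_vF J_def\<close>)
      then show "p = q" unfolding p q J_def by (rule E_vF_eq)
    qed
    show "mu_a act ` orbitA act (vF F) = rel_interior F"
    proof
      show "mu_a act ` orbitA act (vF F) \<subseteq> rel_interior F"
      proof
        fix p assume "p \<in> mu_a act ` orbitA act (vF F)"
        then obtain \<xi> where p: "p = mu_a act (E \<xi> (vF F))" unfolding orbit_eq by auto
        show "p \<in> rel_interior F" unfolding ri p mu_E_vF J_def[symmetric]
          using wJ by (intro CollectI exI[of _ "\<lambda>i. w i * exp (2 * inner (a i) \<xi>)"]) auto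
      qed
    next
      show "rel_interior F \<subseteq> mu_a act ` orbitA act (vF F)"
      proof
        fix p assume "p \<in> rel_interior F"
        then obtain s where s: "\<forall>i\<in>J. s i > 0" "p = (\<Sum>i\<in>J. s i *\<^sub>R a i)" unfolding ri by blast
        obtain \<xi> where "(\<Sum>i\<in>J. (w i * exp (2 * inner (a i) \<xi>)) *\<^sub>R a i) = (\<Sum>i\<in>J. s i *\<^sub>R a i)"
          using exp_surj[OF finJ wJ s(1)] by blast
        then have "p = mu_a act (E \<xi> (vF F))" unfolding mu_E_vF J_def[symmetric] s(2) by simp
        then show "p \<in> mu_a act ` orbitA act (vF F)" unfolding orbit_eq by auto
      qed
    qed
  qed
qed

end

context setting_x
begin

lemma smooth_E: "smooth_on UNIV (\<lambda>\<xi>. E \<xi> y)"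
  unfolding E_def
  by (intro smooth_on_sum smooth_on_scaleR smooth_on_mult smooth_on_exp_inner smooth_on_const open_UNIV)

lemma diffeo_mu:
  assumes F: "F face_of coneC a I" "F \<noteq> {}"
  shows "diffeo_onto (mu_a act) (orbitA act (vF F)) (rel_interior F)"
proof -
  define J where "J = Jf F"
  have FJ: "F = coneC a J" unfolding J_def by (rule face_J[OF F])
  have finJ: "finite J" by simp
  have wJ: "\<forall>i\<in>J. w i > 0" using w_pos Jf_sub unfolding J_def by blast
  have ri: "rel_interior F = {(\<Sum>i\<in>J. s i *\<^sub>R a i) | s. \<forall>i\<in>J. s i > 0}"
    unfolding FJ by (rule rel_interior_coneC[OF finJ])
  have bij: "bij_betw (mu_a act) (orbitA act (vF F)) (rel_interior F)" by (rule bij_mu[OF F])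
  define W where "W = span (a ` J)"
  have subW: "subspace W" unfolding W_def by simp
  obtain B where B: "B \<subseteq> W" "pairwise orthogonal B" "\<And>x. x \<in> B \<Longrightarrow> norm x = 1" "independent B" "span B = W"
    using orthonormal_basis_subspace[OF subW] by metis
  have finB: "finite B" using B(4) independent_imp_finite by blast
  define P where "P \<xi> = (\<Sum>b\<in>B. inner \<xi> b *\<^sub>R b)" for \<xi>
  have Bon: "inner b b' = (if b = b' then 1 else 0)" if "b \<in> B" "b' \<in> B" for b b'
  proof (cases "b = b'")
    case True
    then show ?thesis using B(3)[OF that(1)] by (simp add: norm_eq_1)
  next
    case False
    then show ?thesis using B(2) that by (auto simp: pairwise_def orthogonal_def)
  qed
  have PW: "P \<xi> \<in> W" for \<xi>
    unfolding P_def B(5)[symmetric] by (intro span_sum span_scale span_base)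
  have Porth_B: "inner (\<xi> - P \<xi>) b' = 0" if "b' \<in> B" for \<xi> b'
  proof -
    have "inner (P \<xi>) b' = (\<Sum>b\<in>B. inner \<xi> b * (if b = b' then 1 else 0))"
      unfolding P_def by (simp add: inner_sum_left Bon that)
    also have "\<dots> = inner \<xi> b'" using finB that by (simp add: if_distrib sum.delta' cong: if_cong)
    finally show ?thesis by (simp add: inner_diff_left)
  qed
  have orthW: "inner z u = 0" if "\<And>b. b \<in> B \<Longrightarrow> inner z b = 0" "u \<in> W" for z u
    using orthogonal_to_span[of u B z] that B(5) by (auto simp: orthogonal_def)
  have Porth: "inner (\<xi> - P \<xi>) u = 0" if "u \<in> W" for \<xi> u
    using orthW[OF Porth_B that] by blast
  have zeroW: "z = 0" if "z \<in> W" "\<And>u. u \<in> W \<Longrightarrow> inner z u = 0" for z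
    using that(2)[OF that(1)] by simp
  have Pid: "P u = u" if "u \<in> W" for u
  proof -
    have "u - P u \<in> W" using that PW subspace_diff[OF subW] by blast
    then show ?thesis using zeroW[of "u - P u"] Porth[of _ u] by (metis eq_iff_diff_eq_0 Porth)
  qed
  have aW: "a i \<in> W" if "i \<in> J" for i unfolding W_def using that by (simp add: span_base)
  have perpW: "inner z u = 0" if "\<forall>i\<in>J. inner (a i) z = 0" "u \<in> W" for z u
  proof -
    have "orthogonal z u"
      by (rule orthogonal_to_span[of u "a ` J" z]) (use that in \<open>auto simp: W_def orthogonal_def inner_commute\<close>)
    then show ?thesis by (simp add: orthogonal_def)
  qed
  have linP: "linear P" unfolding P_def
    by (intro linear_compose_sum) (auto simp: linear_iff inner_add_left scaleR_add_left)
  have aP: "inner (a i) (P \<xi>) = inner (a i) \<xi>" if "i \<in> J" for i \<xi>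
  proof -
    have "inner (a i) (\<xi> - P \<xi>) = 0" using Porth[OF aW[OF that], of \<xi>] by (simp only: inner_commute)
    then show ?thesis by (simp add: inner_diff_right)
  qed
  define \<Psi> where "\<Psi> \<xi> = (\<Sum>i\<in>J. (w i * exp (2 * inner (a i) \<xi>)) *\<^sub>R a i)" for \<xi>
  have \<Psi>W: "\<Psi> \<xi> \<in> W" for \<xi> unfolding \<Psi>_def W_def by (intro span_sum span_scale span_base) auto
  have \<Psi>P: "\<Psi> (P \<xi>) = \<Psi> \<xi>" for \<xi> unfolding \<Psi>_def by (rule sum.cong) (simp_all add: aP)
  define \<Phi> where "\<Phi> \<xi> = \<Psi> \<xi> + (\<xi> - P \<xi>)" for \<xi>
  define L\<Phi> where "L\<Phi> \<xi> d = (\<Sum>i\<in>J. (w i * (exp (2 * inner (a i) \<xi>) * (2 * inner (a i) d))) *\<^sub>R a i) + (d - P d)" for \<xi> d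
  have \<Phi>der: "(\<Phi> has_derivative L\<Phi> \<xi>) (at \<xi>)" for \<xi>
  proof -
    have "((\<lambda>\<xi>. (w i * exp (2 * inner (a i) \<xi>)) *\<^sub>R a i) has_derivative
          (\<lambda>d. (w i * (exp (2 * inner (a i) \<xi>) * (2 * inner (a i) d))) *\<^sub>R a i)) (at \<xi>)" for i
      by (auto intro!: derivative_eq_intros)
    moreover have "((\<lambda>\<xi>. \<xi> - P \<xi>) has_derivative (\<lambda>d. d - P d)) (at \<xi>)"
      using linP by (intro bounded_linear_imp_has_derivative) (simp add: linear_conv_bounded_linear[symmetric] linear_compose_sub linear_id[unfolded id_def])
    ultimately show ?thesis unfolding \<Phi>_def[abs_def] \<Psi>_def L\<Phi>_def
      by (intro has_derivative_add has_derivative_sum) auto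
  qed
  have linL: "linear (L\<Phi> \<xi>)" for \<xi> using \<Phi>der has_derivative_linear by blast
  have Linj: "inj (frechet_derivative \<Phi> (at \<xi>))" for \<xi>
  proof -
    have fd: "frechet_derivative \<Phi> (at \<xi>) = L\<Phi> \<xi>" using frechet_derivative_at[OF \<Phi>der] by simp
    have "e = 0" if e: "L\<Phi> \<xi> e = 0" for e
    proof -
      define S where "S = (\<Sum>i\<in>J. (w i * (exp (2 * inner (a i) \<xi>) * (2 * inner (a i) e))) *\<^sub>R a i)"
      have SW: "S \<in> W" unfolding S_def W_def by (intro span_sum span_scale span_base) auto
      have Se: "S + (e - P e) = 0" using e unfolding L\<Phi>_def S_def by simp
      have "inner (S + (e - P e)) (e - P e) = 0" using Se by simp
      moreover have "inner S (e - P e) = 0" using Porth[OF SW, of e] by (simp add: inner_commute)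
      ultimately have "inner (e - P e) (e - P e) = 0" by (simp add: inner_add_left)
      then have eP: "e - P e = 0" by simp
      then have S0: "S = 0" using Se by simp
      have "inner S e = (\<Sum>i\<in>J. 2 * w i * exp (2 * inner (a i) \<xi>) * (inner (a i) e)\<^sup>2)"
        unfolding S_def by (simp add: inner_sum_left power2_eq_square mult_ac)
      then have sum0: "(\<Sum>i\<in>J. 2 * w i * exp (2 * inner (a i) \<xi>) * (inner (a i) e)\<^sup>2) = 0" using S0 by simp
      have nn: "\<And>i. i \<in> J \<Longrightarrow> 2 * w i * exp (2 * inner (a i) \<xi>) * (inner (a i) e)\<^sup>2 \<ge> 0"
        using wJ by (simp add: less_imp_le)
      have all0: "\<forall>i\<in>J. 2 * w i * exp (2 * inner (a i) \<xi>) * (inner (a i) e)\<^sup>2 = 0"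
        using sum_nonneg_eq_0_iff[OF finJ nn] sum0 by simp
      have ae: "\<forall>i\<in>J. inner (a i) e = 0"
      proof
        fix i assume i: "i \<in> J"
        have "w i \<noteq> 0" using wJ i by auto
        moreover have "w i = 0 \<or> inner (a i) e = 0" using all0 i by simp
        ultimately show "inner (a i) e = 0" by blast
      qed
      have eW: "e \<in> W" using PW[of e] eP by simp
      show "e = 0" by (rule zeroW[OF eW perpW[OF ae]])
    qed
    then show ?thesis unfolding fd using linear_injective_0[OF linL] by blast
  qed
  have \<Phi>inj: "inj \<Phi>"
  proof (rule injI)
    fix \<xi> \<xi>' assume eq: "\<Phi> \<xi> = \<Phi> \<xi>'"
    have d: "\<Psi> \<xi> - \<Psi> \<xi>' = (\<xi>' - P \<xi>') - (\<xi> - P \<xi>)" using eq unfolding \<Phi>_def by (simp add: algebra_simps)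
    have "\<Psi> \<xi> - \<Psi> \<xi>' \<in> W" using \<Psi>W subspace_diff[OF subW] by blast
    moreover have "inner (\<Psi> \<xi> - \<Psi> \<xi>') u = 0" if "u \<in> W" for u
      unfolding d using Porth[OF that] by (simp add: inner_diff_left)
    ultimately have "\<Psi> \<xi> - \<Psi> \<xi>' = 0" using zeroW by blast
    then have "\<Psi> \<xi> = \<Psi> \<xi>'" by simp
    then have u: "\<forall>i\<in>J. inner (a i) \<xi> = inner (a i) \<xi>'" unfolding \<Psi>_def by (rule exp_inj[OF finJ wJ])
    have "\<xi> - P \<xi> = \<xi>' - P \<xi>'" using d \<open>\<Psi> \<xi> = \<Psi> \<xi>'\<close> by simp
    then have "\<xi> - \<xi>' = P \<xi> - P \<xi>'" by (simp add: algebra_simps)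
    then have inW: "\<xi> - \<xi>' \<in> W" using PW subspace_diff[OF subW] by metis
    have "\<forall>i\<in>J. inner (a i) (\<xi> - \<xi>') = 0" using u by (simp add: inner_diff_right)
    then have "\<xi> - \<xi>' = 0" using zeroW[OF inW] perpW by blast
    then show "\<xi> = \<xi>'" by simp
  qed
  have \<Phi>smooth: "smooth_on UNIV \<Phi>"
  proof -
    have "smooth_on UNIV (\<lambda>\<xi>. (\<Sum>i\<in>J. (w i * exp (inner (2 *\<^sub>R a i) \<xi>)) *\<^sub>R a i) + (\<xi> - P \<xi>))"
      using linP
      by (intro smooth_on_add smooth_on_sum smooth_on_scaleR smooth_on_mult smooth_on_exp_inner smooth_on_const smooth_on_linear open_UNIV)
         (simp_all add: linear_compose_sub linear_id[unfolded id_def])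
    then show ?thesis by (rule smooth_on_cong) (simp add: \<Phi>_def \<Psi>_def)
  qed
  interpret ift \<Phi> using \<Phi>smooth \<Phi>inj Linj by unfold_locales auto
  define h where "h \<xi> = E \<xi> (vF F)" for \<xi>
  have sm: "smooth_on (range \<Phi>) (\<lambda>p. h (inv \<Phi> p))"
    unfolding h_def by (rule smooth_inv_comp[OF smooth_E])
  have Uo: "open (range \<Phi>)" using smooth_onD(1)[OF sm] .
  have key: "q \<in> range \<Phi> \<and> inv_into (orbitA act (vF F)) (mu_a act) q = h (inv \<Phi> q)" if q: "q \<in> rel_interior F" for q
  proof -
    obtain s where s: "\<forall>i\<in>J. s i > 0" "q = (\<Sum>i\<in>J. s i *\<^sub>R a i)" using q unfolding ri by blast
    obtain \<xi>0 where \<xi>0: "\<Psi> \<xi>0 = q" using exp_surj[OF finJ wJ s(1)] s(2) unfolding \<Psi>_def by metis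
    have "\<Phi> (P \<xi>0) = q" unfolding \<Phi>_def \<Psi>P \<xi>0 using Pid[OF PW[of \<xi>0]] by simp
    then have q1: "q \<in> range \<Phi>" and q2: "inv \<Phi> q = P \<xi>0" using \<Phi>inj by (auto intro: inv_f_eq)
    have "h (P \<xi>0) \<in> orbitA act (vF F)" unfolding h_def orbit_eq by auto
    moreover have "mu_a act (h (P \<xi>0)) = q"
      unfolding h_def mu_E_vF J_def[symmetric] using \<Psi>P \<xi>0 unfolding \<Psi>_def by simp
    ultimately have "inv_into (orbitA act (vF F)) (mu_a act) q = h (P \<xi>0)"
      using bij unfolding bij_betw_def by (metis inv_into_f_f)
    then show ?thesis using q1 q2 by simp
  qed
  show ?thesis
    unfolding diffeo_onto_def
  proof (intro conjI bij)
    show "smooth_map_on (orbitA act (vF F)) (mu_a act)"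
      unfolding smooth_map_on_def using mu_smooth by blast
    show "smooth_map_on (rel_interior F) (inv_into (orbitA act (vF F)) (mu_a act))"
      unfolding smooth_map_on_def
    proof
      fix q assume "q \<in> rel_interior F"
      then show "\<exists>U g. open U \<and> q \<in> U \<and> smooth_on U g \<and> (\<forall>y\<in>rel_interior F \<inter> U. g y = inv_into (orbitA act (vF F)) (mu_a act) y)"
        using key Uo sm by (intro exI[of _ "range \<Phi>"] exI[of _ "\<lambda>p. h (inv \<Phi> p)"]) auto
    qed
  qed
qed

end

context setting_x
begin

lemma E_sum_form: "E \<xi> y = (\<Sum>i\<in>UNIV. (exp (inner (a i) \<xi>) * inner y (v i)) *\<^sub>R v i)"
  by (simp add: E_def)

lemma orbit_vF_sub_closure:
  assumes F: "F face_of coneC a I" "F \<noteq> {}"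
  shows "orbitA act (vF F) \<subseteq> closure (orbitA act x)"
proof
  fix p assume "p \<in> orbitA act (vF F)"
  then obtain \<zeta> where p: "p = E \<zeta> (vF F)" unfolding orbit_eq by auto
  obtain \<eta> where \<eta>: "\<forall>i\<in>I. inner (a i) \<eta> \<le> 0 \<and> (inner (a i) \<eta> = 0 \<longleftrightarrow> a i \<in> F)"
    using face_exposing[of I F a] F by auto
  define X where "X n = E (\<zeta> + real n *\<^sub>R \<eta>) x" for n
  have Xin: "X n \<in> orbitA act x" for n unfolding X_def orbit_eq by auto
  have lim: "((\<lambda>n. exp (inner (a i) \<zeta> + real n * inner (a i) \<eta>) * c i) \<longlongrightarrow>
                exp (inner (a i) \<zeta>) * (if i \<in> Jf F then c i else 0)) sequentially" for i
  proof (cases "i \<in> I")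
    case False
    then have "c i = 0" "i \<notin> Jf F" using I_eq Jf_sub by auto
    then show ?thesis by simp
  next
    case True
    show ?thesis
    proof (cases "inner (a i) \<eta> = 0")
      case True
      then have "i \<in> Jf F" using \<eta> \<open>i \<in> I\<close> unfolding Jf_def by auto
      then show ?thesis using True by simp
    next
      case False
      then have neg: "inner (a i) \<eta> < 0" and nJ: "i \<notin> Jf F" using \<eta> \<open>i \<in> I\<close> unfolding Jf_def by force+
      have eq: "exp (inner (a i) \<zeta> + real n * inner (a i) \<eta>) * c i = (exp (inner (a i) \<zeta>) * c i) * exp (inner (a i) \<eta>) ^ n" for n
        by (simp add: exp_add exp_of_nat_mult)
      have "((\<lambda>n. exp (inner (a i) \<eta>) ^ n) \<longlongrightarrow> 0) sequentially"
        by (rule LIMSEQ_power_zero) (use neg in simp)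
      then have "((\<lambda>n. (exp (inner (a i) \<zeta>) * c i) * exp (inner (a i) \<eta>) ^ n) \<longlongrightarrow> 0) sequentially"
        by (rule tendsto_mult_right_zero)
      then show ?thesis unfolding eq using nJ by simp
    qed
  qed
  have "(X \<longlongrightarrow> p) sequentially"
  proof -
    have X_eq: "X n = (\<Sum>i\<in>UNIV. (exp (inner (a i) \<zeta> + real n * inner (a i) \<eta>) * c i) *\<^sub>R v i)" for n
      unfolding X_def E_def c_def by (simp add: inner_add_right)
    have p_eq: "p = (\<Sum>i\<in>UNIV. (exp (inner (a i) \<zeta>) * (if i \<in> Jf F then c i else 0)) *\<^sub>R v i)"
      unfolding p E_def vF_coord ..
    show ?thesis unfolding X_eq p_eq
      by (intro tendsto_sum tendsto_scaleR lim tendsto_const)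
  qed
  then show "p \<in> closure (orbitA act x)" unfolding closure_sequential using Xin by blast
qed

lemma closure_sub_orbits:
  assumes y: "y \<in> closure (orbitA act x)"
  shows "\<exists>F. F face_of coneC a I \<and> F \<noteq> {} \<and> y \<in> orbitA act (vF F)"
proof -
  obtain X where X: "\<forall>n. X n \<in> orbitA act x" "(X \<longlongrightarrow> y) sequentially"
    using y unfolding closure_sequential by blast
  have "\<forall>n. \<exists>\<xi>. X n = E \<xi> x" using X(1) unfolding orbit_eq by blast
  then obtain \<xi> where \<xi>: "\<And>n. X n = E (\<xi> n) x" by metis
  define u where "u i n = inner (a i) (\<xi> n)" for i n
  define yc where "yc i = inner y (v i)" for i
  have lim0: "((\<lambda>n. exp (u i n) * c i) \<longlongrightarrow> yc i) sequentially" for i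
  proof -
    have "((\<lambda>n. inner (X n) (v i)) \<longlongrightarrow> inner y (v i)) sequentially"
      by (intro tendsto_inner X(2) tendsto_const)
    then show ?thesis unfolding \<xi> E_coord u_def yc_def c_def .
  qed
  have ycI: "yc i = 0" if "i \<notin> I" for i
  proof -
    have "c i = 0" using that I_eq by auto
    then have "((\<lambda>n. 0) \<longlongrightarrow> yc i) sequentially" using lim0[of i] by simp
    then show ?thesis using tendsto_const LIMSEQ_unique by blast
  qed
  have limE: "((\<lambda>n. exp (u i n)) \<longlongrightarrow> yc i / c i) sequentially" if "i \<in> I" for i
  proof -
    have ci: "c i \<noteq> 0" using that I_eq by auto
    have "((\<lambda>n. exp (u i n) * c i / c i) \<longlongrightarrow> yc i / c i) sequentially"
      by (intro tendsto_divide lim0 tendsto_const ci)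
    then show ?thesis using ci by simp
  qed
  define J where "J = {i \<in> I. yc i \<noteq> 0}"
  have JI: "J \<subseteq> I" unfolding J_def by auto
  define r where "r i = yc i / c i" for i
  have rpos: "r i > 0" if "i \<in> J" for i
  proof -
    have iI: "i \<in> I" using that JI by auto
    have "r i \<ge> 0"
      unfolding r_def by (rule tendsto_lowerbound[OF limE[OF iI]]) (auto intro: less_imp_le)
    moreover have "r i \<noteq> 0" using that iI I_eq unfolding r_def J_def by auto
    ultimately show ?thesis by simp
  qed
  have limu: "((\<lambda>n. u i n) \<longlongrightarrow> ln (r i)) sequentially" if "i \<in> J" for i
  proof -
    have "((\<lambda>n. ln (exp (u i n))) \<longlongrightarrow> ln (r i)) sequentially"
      unfolding r_def by (rule tendsto_ln[OF limE]) (use that JI rpos[OF that] r_def in auto)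
    then show ?thesis by simp
  qed
  have lim00: "((\<lambda>n. exp (u i n)) \<longlongrightarrow> 0) sequentially" if "i \<in> I - J" for i
    using limE[of i] that unfolding J_def by auto
  have H: "\<forall>i\<in>I - J. s i = 0" if s: "\<forall>i\<in>I. s i \<ge> 0" and sJ: "(\<Sum>i\<in>I. s i *\<^sub>R a i) \<in> coneC a J" for s
  proof (rule ccontr)
    assume "\<not> (\<forall>i\<in>I - J. s i = 0)"
    then obtain i0 where i0: "i0 \<in> I - J" "s i0 \<noteq> 0" by blast
    have s0: "s i0 > 0" using s i0 by force
    obtain t where t: "\<forall>i\<in>J. t i \<ge> 0" "(\<Sum>i\<in>I. s i *\<^sub>R a i) = (\<Sum>i\<in>J. t i *\<^sub>R a i)"
      using sJ unfolding coneC_iff by blast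
    define A where "A n = (\<Sum>i\<in>I - J. s i * u i n)" for n
    have A_eq: "A n = (\<Sum>i\<in>J. t i * u i n) - (\<Sum>i\<in>J. s i * u i n)" for n
    proof -
      have "inner (\<Sum>i\<in>I. s i *\<^sub>R a i) (\<xi> n) = inner (\<Sum>i\<in>J. t i *\<^sub>R a i) (\<xi> n)" using t(2) by simp
      then have "(\<Sum>i\<in>I. s i * u i n) = (\<Sum>i\<in>J. t i * u i n)" unfolding u_def by (simp add: inner_sum_left)
      moreover have "(\<Sum>i\<in>I. s i * u i n) = (\<Sum>i\<in>J. s i * u i n) + A n"
        unfolding A_def using JI by (simp add: sum.subset_diff[of J I])
      ultimately show ?thesis by simp
    qed
    define M where "M = (\<Sum>i\<in>J. t i * ln (r i)) - (\<Sum>i\<in>J. s i * ln (r i))"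
    have "(A \<longlongrightarrow> M) sequentially" unfolding A_eq[abs_def] M_def
      by (intro tendsto_diff tendsto_sum tendsto_mult tendsto_const limu) auto
    then have ev1: "eventually (\<lambda>n. A n > M - 1) sequentially"
      by (rule order_tendstoD(1)) simp
    have evi: "eventually (\<lambda>n. u i n < 0) sequentially" if i: "i \<in> I - J" for i
    proof -
      have "eventually (\<lambda>n. exp (u i n) < 1) sequentially"
        by (rule order_tendstoD(2)[OF lim00[OF i]]) simp
      then show ?thesis by (rule eventually_mono) simp
    qed
    have ev2: "eventually (\<lambda>n. \<forall>i\<in>I - J. u i n < 0) sequentially"
      by (rule eventually_ball_finite) (use evi in auto)
    have "eventually (\<lambda>n. exp (u i0 n) < exp ((M - 1) / s i0)) sequentially"
      by (rule order_tendstoD(2)[OF lim00[OF i0(1)]]) simp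
    then have ev3: "eventually (\<lambda>n. s i0 * u i0 n < M - 1) sequentially"
      by (rule eventually_mono) (use s0 in \<open>simp add: pos_less_divide_eq mult.commute\<close>)
    have "eventually (\<lambda>n. False) sequentially"
      using ev1 ev2 ev3
    proof eventually_elim
      case (elim n)
      have "A n = s i0 * u i0 n + (\<Sum>i\<in>I - J - {i0}. s i * u i n)"
        unfolding A_def using i0(1) by (simp add: sum.remove)
      moreover have "(\<Sum>i\<in>I - J - {i0}. s i * u i n) \<le> 0"
        by (rule sum_nonpos) (use elim(2) s in \<open>auto intro: mult_nonneg_nonpos less_imp_le\<close>)
      ultimately show False using elim(1,3) by linarith
    qed
    then show False by simp
  qed
  define F where "F = coneC a J"
  have finI: "finite I" by simp
  have Fface: "F face_of coneC a I" and JF: "{i\<in>I. a i \<in> F} = J"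
    unfolding F_def using face_from_condition[OF finI JI H] by auto
  have Fne: "F \<noteq> {}" unfolding F_def using coneC_0 by blast
  have JfF: "Jf F = J" unfolding Jf_def using JF by simp
  define T :: "'a \<Rightarrow> real ^ 'i" where "T \<xi>' = (\<chi> i. if i \<in> J then inner (a i) \<xi>' else 0)" for \<xi>'
  have linT: "linear T" unfolding T_def
    by (auto simp: linear_iff vec_eq_iff inner_add_right inner_scaleR_right)
  have clT: "closed (range T)"
    by (rule closed_subspace) (rule linear_subspace_image[OF linT subspace_UNIV])
  define L :: "real ^ 'i" where "L = (\<chi> i. if i \<in> J then ln (r i) else 0)"
  have "((\<lambda>n. T (\<xi> n)) \<longlongrightarrow> L) sequentially"
    unfolding T_def L_def u_def[symmetric]
    by (intro tendsto_vec_lambda) (auto intro: limu)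
  then have "L \<in> range T" by (rule closed_sequentially[OF clT, rotated]) simp
  then obtain \<xi>' where \<xi>': "T \<xi>' = L" by blast
  have ui: "inner (a i) \<xi>' = ln (r i)" if "i \<in> J" for i
  proof -
    have "T \<xi>' $ i = L $ i" using \<xi>' by simp
    then show ?thesis using that unfolding T_def L_def by simp
  qed
  have "E \<xi>' (vF F) = y"
  proof (rule coord_eq)
    fix j
    show "inner (E \<xi>' (vF F)) (v j) = inner y (v j)"
    proof (cases "j \<in> J")
      case True
      have cj: "c j \<noteq> 0" using True JI I_eq by auto
      have "inner (E \<xi>' (vF F)) (v j) = exp (ln (r j)) * c j" using True by (simp add: E_coord vF_coord JfF ui)
      also have "\<dots> = r j * c j" using rpos[OF True] by simp
      also have "\<dots> = inner y (v j)" unfolding r_def yc_def using cj by simp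
      finally show ?thesis .
    next
      case False
      have "inner y (v j) = 0"
      proof (cases "j \<in> I")
        case True then show ?thesis using False unfolding J_def yc_def by auto
      next
        case False then show ?thesis using ycI unfolding yc_def by auto
      qed
      then show ?thesis using False by (simp add: E_coord vF_coord JfF)
    qed
  qed
  then have "y \<in> orbitA act (vF F)" unfolding orbit_eq by (auto intro: range_eqI[symmetric])
  then show ?thesis using Fface Fne by blast
qed

end

theorem mainTheorem2:
  fixes act :: "'a::euclidean_space \<Rightarrow> 'v::euclidean_space \<Rightarrow> 'v"
    and v :: "'i::finite \<Rightarrow> 'v"
    and \<alpha> :: "'i \<Rightarrow> 'a \<Rightarrow> real"
    and x :: 'v
  assumes act_lin: "\<And>\<xi>. linear (act \<xi>)"
    and act_lin2: "\<And>y. linear (\<lambda>\<xi>. act \<xi> y)"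
    and act_inj: "\<And>\<xi> \<eta>. act \<xi> = act \<eta> \<Longrightarrow> \<xi> = \<eta>"
    and act_sym: "\<And>\<xi> y z. inner (act \<xi> y) z = inner y (act \<xi> z)"
    and act_comm: "\<And>\<xi> \<eta> y. act \<xi> (act \<eta> y) = act \<eta> (act \<xi> y)"
    and v_orth: "\<And>i j. inner (v i) (v j) = (if i = j then 1 else 0)"
    and v_span: "span (range v) = UNIV"
    and \<alpha>_lin: "\<And>i. linear (\<alpha> i)"
    and v_eig: "\<And>\<xi> i. act \<xi> (v i) = \<alpha> i \<xi> *\<^sub>R v i"
  shows "(\<forall>F. F face_of coneC (\<lambda>i. dual_vec (\<alpha> i)) (supp v x) \<and> F \<noteq> {} \<longrightarrow>
            (let J = {i \<in> supp v x. dual_vec (\<alpha> i) \<in> F};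
                 vF = (\<Sum>i\<in>J. inner x (v i) *\<^sub>R v i)
             in diffeo_onto (mu_a act) (orbitA act vF) (rel_interior F)))
       \<and> closure (orbitA act x) =
           (\<Union>F\<in>{F. F face_of coneC (\<lambda>i. dual_vec (\<alpha> i)) (supp v x) \<and> F \<noteq> {}}.
              orbitA act (\<Sum>i\<in>{i \<in> supp v x. dual_vec (\<alpha> i) \<in> F}. inner x (v i) *\<^sub>R v i))
       \<and> (\<forall>F F'. F face_of coneC (\<lambda>i. dual_vec (\<alpha> i)) (supp v x) \<and> F \<noteq> {}
              \<and> F' face_of coneC (\<lambda>i. dual_vec (\<alpha> i)) (supp v x) \<and> F' \<noteq> {} \<and> F \<noteq> F' \<longrightarrow>
              orbitA act (\<Sum>i\<in>{i \<in> supp v x. dual_vec (\<alpha> i) \<in> F}. inner x (v i) *\<^sub>R v i)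
              \<inter> orbitA act (\<Sum>i\<in>{i \<in> supp v x. dual_vec (\<alpha> i) \<in> F'}. inner x (v i) *\<^sub>R v i) = {})"
proof -
  interpret setting_x act v \<alpha> x
    using act_lin v_orth v_span \<alpha>_lin v_eig by (simp add: setting_x_def setting_def)
  have A: "(\<lambda>i. dual_vec (\<alpha> i)) = a" by (rule a_fun)
  have B: "{i \<in> supp v x. dual_vec (\<alpha> i) \<in> F} = Jf F" for F by (simp add: Jf_def a_def)
  have C: "(\<Sum>i\<in>Jf F. inner x (v i) *\<^sub>R v i) = vF F" for F by (simp add: vF_def c_def)
  show ?thesis
    unfolding Let_def B C A
  proof (intro conjI allI impI)
    fix F assume "F face_of coneC a (supp v x) \<and> F \<noteq> {}"
    then show "diffeo_onto (mu_a act) (orbitA act (vF F)) (rel_interior F)"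
      using diffeo_mu by blast
  next
    show "closure (orbitA act x) = (\<Union>F\<in>{F. F face_of coneC a (supp v x) \<and> F \<noteq> {}}. orbitA act (vF F))"
    proof
      show "closure (orbitA act x) \<subseteq> (\<Union>F\<in>{F. F face_of coneC a (supp v x) \<and> F \<noteq> {}}. orbitA act (vF F))"
        using closure_sub_orbits by blast
      show "(\<Union>F\<in>{F. F face_of coneC a (supp v x) \<and> F \<noteq> {}}. orbitA act (vF F)) \<subseteq> closure (orbitA act x)"
        using orbit_vF_sub_closure by blast
    qed
  next
    fix F F' assume "F face_of coneC a (supp v x) \<and> F \<noteq> {} \<and> F' face_of coneC a (supp v x) \<and> F' \<noteq> {} \<and> F \<noteq> F'"
    then show "orbitA act (vF F) \<inter> orbitA act (vF F') = {}"
      using orbit_vF_disjoint by blast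
  qed
qed

end
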